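(* Let $N\ge1$ and $\gamma=(\gamma_\ell)_{-N\le\ell\le N}\in\mathbb{C}^{2N+1}$ be fixed, and for $\varepsilon>0$ let $\Box_\varepsilon\in\mathcal O_{N,\varepsilon}$ be the operator with coefficients $c_\ell=\gamma_\ell/\varepsilon$. The following six properties are equivalent (all limits are as $\varepsilon\to0^+$, and "locally uniformly in $]a,b[$" means uniformly on $[a+\delta,b-\delta]$ for every $\delta>0$): (a) D.E.L. converges to C.E.L.: for all smooth $P,Q,R:[a,b]\to\mathbb{R}^{d\times d}$ with $P,Q$ symmetric and $R$ skew-symmetric, all smooth $J_1,J_2:[a,b]\to\mathbb{R}^d$, and all $\mathbf x\in\mathcal C^2([a,b],\mathbb{R}^d)$, $\Theta(\mathbf x)\to-P\ddot{\mathbf x}+(-\dot P+2R)\dot{\mathbf x}+(\dot R+Q)\mathbf x-\dot J_1+J_2$ locally uniformly in $]a,b[$; (b) for all $\mathbf x\in\mathcal C^2([a,b],\mathbb{R}^d)$, $\Box_\varepsilon\mathbf x\to\dot{\mathbf x}$ locally uniformly in $]a,b[$; (c) for all $\mathbf x\in\mathcal C^2([a,b],\mathbb{R}^d)$, $\Box_{-\varepsilon}\mathbf x\to-\dot{\mathbf x}$ locally uniformly in $]a,b[$; (d) the functions $t\mapsto\Box_\varepsilon1$ and $t\mapsto\Box_\varepsilon t$ converge respectively to $0$ and $1$ locally uniformly in $]a,b[$; (e) $\Box_\varepsilon\in\tilde{\mathcal O}_{N,\varepsilon}$, i.e. $\sum_{\ell=-N}^N\gamma_\ell=0$ and $\sum_{\ell=-N}^N\ell\gamma_\ell=1$;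 (f) there exist $k_1,\dots,k_{2N-1}\in\mathbb{C}$ such that $\Box_\varepsilon\mathbf x(t)=\Box^{[1,0]}_\varepsilon\mathbf x(t)+\sum_{\ell=-(N-1)}^{N-1}k_{\ell+N}\,\Box^{[1,-1]}_\varepsilon\mathbf x(t-\ell\varepsilon)$ for all $\mathbf x$ and all $t$ in the safety interval $[a+2N\varepsilon,b-2N\varepsilon]$ (equivalently, the coefficient vector $\gamma$ equals that of the forward difference, $\gamma_0=-1,\gamma_1=1$, plus $\sum_{\ell}k_{\ell+N}$ times the vector with entries $1,-2,1$ at indices $-\ell-1,-\ell,-\ell+1$).
   Context: Fix $[a,b]$. For $\varepsilon>0$ and each integer $\ell$, $\chi_\ell$ is the indicator function of $[\max(a,a+\ell\varepsilon),\min(b,b+\ell\varepsilon)]$; a term multiplied by a vanishing characteristic function is $0$. Given coefficients $(c_\ell)_{-N\le\ell\le N}$, $\Box_\varepsilon\mathbf x(t)=\sum_{\ell=-N}^{N}c_\ell\,\mathbf x(t+\ell\varepsilon)\chi_{-\ell}(t)$ (componentwise) and $\Box_{-\varepsilon}\mathbf f(t)=\sum_{\ell=-N}^{N}c_\ell\,\mathbf f(t-\ell\varepsilon)\chi_{\ell}(t)$ (same coefficients). $\mathcal O_{N,\varepsilon}$ is the set of such operators with $c_\ell=\gamma_\ell/\varepsilon$, $\gamma_\ell\in\mathbb{C}$ independent of $\varepsilon$; $\tilde{\mathcal O}_{N,\varepsilon}\subset\mathcal O_{N,\varepsilon}$ consists of those with $\Box_\varepsilon1=0$ and $\Box_\varepsilon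 t=1$ for $t$ in the safety interval $[a+2N\varepsilon,b-2N\varepsilon]$. For $r,s\in\mathbb{C}$, $\Box^{[r,s]}_\varepsilon\mathbf x(t)=-\chi_{1}(t)\frac{s}{\varepsilon}\mathbf x(t-\varepsilon)+\frac{s-r}{\varepsilon}\mathbf x(t)+\chi_{-1}(t)\frac{r}{\varepsilon}\mathbf x(t+\varepsilon)$. For matrix/vector functions $P,Q,R,J_1,J_2$ on $[a,b]$ and $\mathbf x:[a,b]\to\mathbb{R}^d$, \[ \Theta(\mathbf x)(t)=\Box_{-\varepsilon}(P\,\Box_\varepsilon\mathbf x)(t)-\Box_{-\varepsilon}(R\mathbf x)(t)+R(t)\Box_\varepsilon\mathbf x(t)+Q(t)\mathbf x(t)+\Box_{-\varepsilon}J_1(t)+J_2(t), \] the left-hand side of the discrete Euler–Lagrange equation of the quadratic lagrangian $\frac12{}^t\dot{\mathbf x}P\dot{\mathbf x}+\frac12{}^t\mathbf xQ\mathbf x+{}^t\mathbf xR\dot{\mathbf x}+{}^tJ_1\dot{\mathbf x}+{}^tJ_2\mathbf x+J_3$ (${}^t$ denotes transpose). *)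

theory Defs
  imports "HOL-Analysis.Analysis"
begin

definition chi :: "real \<Rightarrow> real \<Rightarrow> real \<Rightarrow> int \<Rightarrow> real \<Rightarrow> complex" where
  "chi a b \<epsilon> l t =
     (if max a (a + of_int l * \<epsilon>) \<le> t \<and> t \<le> min b (b + of_int l * \<epsilon>) then 1 else 0)"

definition boxp :: "real \<Rightarrow> real \<Rightarrow> nat \<Rightarrow> (int \<Rightarrow> complex) \<Rightarrow> real
    \<Rightarrow> (real \<Rightarrow> complex) \<Rightarrow> real \<Rightarrow> complex" where
  "boxp a b N \<gamma> \<epsilon> f t =
     (\<Sum>l\<in>{- int N..int N}. \<gamma> l / complex_of_real \<epsilon> * f (t + of_int l * \<epsilon>) * chi a b \<epsilon> (- l) t)"

definition boxm :: "real \<Rightarrow> real \<Rightarrow> nat \<Rightarrow> (int \<Rightarrow> complex) \<Rightarrow> real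
    \<Rightarrow> (real \<Rightarrow> complex) \<Rightarrow> real \<Rightarrow> complex" where
  "boxm a b N \<gamma> \<epsilon> f t =
     (\<Sum>l\<in>{- int N..int N}. \<gamma> l / complex_of_real \<epsilon> * f (t - of_int l * \<epsilon>) * chi a b \<epsilon> l t)"

definition boxrs :: "real \<Rightarrow> real \<Rightarrow> complex \<Rightarrow> complex \<Rightarrow> real
    \<Rightarrow> (real \<Rightarrow> complex) \<Rightarrow> real \<Rightarrow> complex" where
  "boxrs a b r s \<epsilon> f t =
     - chi a b \<epsilon> 1 t * (s / complex_of_real \<epsilon>) * f (t - \<epsilon>)
     + (s - r) / complex_of_real \<epsilon> * f t
     + chi a b \<epsilon> (-1) t * (r / complex_of_real \<epsilon>) * f (t + \<epsilon>)"

definition boxpv :: "real \<Rightarrow> real \<Rightarrow> nat \<Rightarrow> (int \<Rightarrow> complex) \<Rightarrow> real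
    \<Rightarrow> (real \<Rightarrow> complex ^ 'd) \<Rightarrow> real \<Rightarrow> complex ^ 'd" where
  "boxpv a b N \<gamma> \<epsilon> f t = (\<chi> i. boxp a b N \<gamma> \<epsilon> (\<lambda>s. f s $ i) t)"

definition boxmv :: "real \<Rightarrow> real \<Rightarrow> nat \<Rightarrow> (int \<Rightarrow> complex) \<Rightarrow> real
    \<Rightarrow> (real \<Rightarrow> complex ^ 'd) \<Rightarrow> real \<Rightarrow> complex ^ 'd" where
  "boxmv a b N \<gamma> \<epsilon> f t = (\<chi> i. boxm a b N \<gamma> \<epsilon> (\<lambda>s. f s $ i) t)"

definition boxrsv :: "real \<Rightarrow> real \<Rightarrow> complex \<Rightarrow> complex \<Rightarrow> real
    \<Rightarrow> (real \<Rightarrow> complex ^ 'd) \<Rightarrow> real \<Rightarrow> complex ^ 'd" where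
  "boxrsv a b r s \<epsilon> f t = (\<chi> i. boxrs a b r s \<epsilon> (\<lambda>s'. f s' $ i) t)"

definition cvec :: "real ^ 'd \<Rightarrow> complex ^ 'd" where
  "cvec v = (\<chi> i. complex_of_real (v $ i))"

definition cmat :: "real ^ 'd ^ 'e \<Rightarrow> complex ^ 'd ^ 'e" where
  "cmat M = (\<chi> i j. complex_of_real (M $ i $ j))"

definition Theta :: "real \<Rightarrow> real \<Rightarrow> nat \<Rightarrow> (int \<Rightarrow> complex) \<Rightarrow> real
    \<Rightarrow> (real \<Rightarrow> real ^ 'd ^ 'd) \<Rightarrow> (real \<Rightarrow> real ^ 'd ^ 'd) \<Rightarrow> (real \<Rightarrow> real ^ 'd ^ 'd)
    \<Rightarrow> (real \<Rightarrow> real ^ 'd) \<Rightarrow> (real \<Rightarrow> real ^ 'd)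
    \<Rightarrow> (real \<Rightarrow> real ^ 'd) \<Rightarrow> real \<Rightarrow> complex ^ 'd" where
  "Theta a b N \<gamma> \<epsilon> P Q R J1 J2 x t =
     boxmv a b N \<gamma> \<epsilon> (\<lambda>s. cmat (P s) *v boxpv a b N \<gamma> \<epsilon> (\<lambda>u. cvec (x u)) s) t
     - boxmv a b N \<gamma> \<epsilon> (\<lambda>s. cmat (R s) *v cvec (x s)) t
     + cmat (R t) *v boxpv a b N \<gamma> \<epsilon> (\<lambda>u. cvec (x u)) t
     + cmat (Q t) *v cvec (x t)
     + boxmv a b N \<gamma> \<epsilon> (\<lambda>u. cvec (J1 u)) t
     + cvec (J2 t)"

definition C2_on :: "real set \<Rightarrow> (real \<Rightarrow> 'v::real_normed_vector) \<Rightarrow> (real \<Rightarrow> 'v) \<Rightarrow> (real \<Rightarrow> 'v) \<Rightarrow> bool" where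
  "C2_on S x x' x'' \<longleftrightarrow>
     (\<forall>t\<in>S. (x has_vector_derivative x' t) (at t within S)) \<and>
     (\<forall>t\<in>S. (x' has_vector_derivative x'' t) (at t within S)) \<and>
     continuous_on S x''"

definition smooth_on :: "real set \<Rightarrow> (real \<Rightarrow> 'v::real_normed_vector) \<Rightarrow> bool" where
  "smooth_on S f \<longleftrightarrow>
     (\<exists>D :: nat \<Rightarrow> real \<Rightarrow> 'v. (\<forall>t\<in>S. D 0 t = f t) \<and>
        (\<forall>k. \<forall>t\<in>S. (D k has_vector_derivative D (Suc k) t) (at t within S)))"

definition loc_unif_conv :: "real \<Rightarrow> real \<Rightarrow> (real \<Rightarrow> real \<Rightarrow> 'v::metric_space) \<Rightarrow> (real \<Rightarrow> 'v) \<Rightarrow> bool" where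
  "loc_unif_conv a b F G \<longleftrightarrow>
     (\<forall>\<delta>>0. uniform_limit {a + \<delta>..b - \<delta>} F G (at_right 0))"

end

theory Submission
  imports Defs
begin


lemma mvt_bound:
  fixes f :: "real \<Rightarrow> 'b::real_normed_vector"
  assumes der: "\<And>u. u \<in> {c..d} \<Longrightarrow> (f has_vector_derivative f' u) (at u within {c..d})"
    and B: "\<And>u. u \<in> {c..d} \<Longrightarrow> norm (f' u) \<le> B"
    and x: "x \<in> {c..d}" and y: "y \<in> {c..d}"
  shows "norm (f x - f y) \<le> B * \<bar>x - y\<bar>"
proof -
  have "norm (f x - f y) \<le> B * norm (x - y)"
  proof (rule differentiable_bound[where f'="\<lambda>u h. h *\<^sub>R f' u"])
    show "convex {c..d}" by simp
    show "(f has_derivative (\<lambda>h. h *\<^sub>R f' u)) (at u within {c..d})" if "u \<in> {c..d}" for u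
      using der[OF that] by (simp add: has_vector_derivative_def)
    show "onorm (\<lambda>h. h *\<^sub>R f' u) \<le> B" if "u \<in> {c..d}" for u
    proof -
      have "onorm (\<lambda>h::real. h *\<^sub>R f' u) = onorm (\<lambda>h::real. h) * norm (f' u)"
        by (rule onorm_scaleR_left) (rule bounded_linear_ident)
      also have "\<dots> = norm (f' u)" by (simp add: onorm_id)
      finally show ?thesis using B[OF that] by simp
    qed
  qed (use x y in auto)
  then show ?thesis by simp
qed

lemma uniform_limit_sum':
  fixes F :: "'i \<Rightarrow> 'a \<Rightarrow> 'b \<Rightarrow> 'c::real_normed_vector"
  assumes "finite I" "\<And>i. i \<in> I \<Longrightarrow> uniform_limit S (F i) (G i) net"
  shows "uniform_limit S (\<lambda>h t. \<Sum>i\<in>I. F i h t) (\<lambda>t. \<Sum>i\<in>I. G i t) net"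
  using assms
proof (induction I rule: finite_induct)
  case empty
  then show ?case by (simp add: uniform_limit_const)
next
  case (insert x I)
  then show ?case by (simp add: uniform_limit_add)
qed

lemma ulim_vec:
  fixes F :: "'a \<Rightarrow> 'b \<Rightarrow> 'c::real_normed_vector ^ 'd"
  assumes "\<And>i. uniform_limit S (\<lambda>h t. F h t $ i) (\<lambda>t. G t $ i) net"
  shows "uniform_limit S F G net"
proof (rule uniform_limitI)
  fix e :: real assume e: "e > 0"
  let ?e = "e / (real CARD('d) + 1)"
  have e': "?e > 0" using e by simp
  have "\<forall>\<^sub>F h in net. \<forall>i. \<forall>t\<in>S. dist (F h t $ i) (G t $ i) < ?e"
    by (rule eventually_all_finite) (use uniform_limitD[OF assms e'] in auto)
  then show "\<forall>\<^sub>F h in net. \<forall>t\<in>S. dist (F h t) (G t) < e"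
  proof (rule eventually_mono)
    fix h assume H: "\<forall>i. \<forall>t\<in>S. dist (F h t $ i) (G t $ i) < ?e"
    show "\<forall>t\<in>S. dist (F h t) (G t) < e"
    proof
      fix t assume t: "t \<in> S"
      have "dist (F h t) (G t) = L2_set (\<lambda>i. dist (F h t $ i) (G t $ i)) UNIV"
        by (simp add: dist_vec_def)
      also have "\<dots> \<le> (\<Sum>i\<in>UNIV. dist (F h t $ i) (G t $ i))"
        by (rule L2_set_le_sum) simp
      also have "\<dots> \<le> (\<Sum>i\<in>(UNIV::'d set). ?e)"
        using H t by (intro sum_mono) (simp add: less_imp_le)
      also have "\<dots> < e" using e by (simp add: field_simps)
      finally show "dist (F h t) (G t) < e" .
    qed
  qed
qed

lemma ulim_at_rightI:
  fixes F :: "real \<Rightarrow> 'b \<Rightarrow> 'c::metric_space"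
  assumes "\<And>e. e > 0 \<Longrightarrow> \<exists>d>0. \<forall>h t. 0 < h \<and> h < d \<and> t \<in> S \<longrightarrow> dist (F h t) (G t) \<le> e"
  shows "uniform_limit S F G (at_right 0)"
proof (rule uniform_limitI)
  fix e :: real assume e: "e > 0"
  obtain d where d: "d > 0" "\<forall>h t. 0 < h \<and> h < d \<and> t \<in> S \<longrightarrow> dist (F h t) (G t) \<le> e/2"
    using assms[of "e/2"] e by auto
  show "\<forall>\<^sub>F h in at_right 0. \<forall>t\<in>S. dist (F h t) (G t) < e"
    unfolding eventually_at_right_field
    using d e by (intro exI[of _ d]) force
qed



lemma FO:
  fixes f :: "real \<Rightarrow> 'b::real_normed_vector"
  assumes der: "\<forall>t\<in>{a..b}. (f has_vector_derivative f' t) (at t within {a..b})"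
    and cont: "continuous_on {a..b} f'" and e: "e > 0"
  shows "\<exists>d>0. \<forall>s u. s \<in> {a..b} \<longrightarrow> u \<in> {a..b} \<longrightarrow> \<bar>u - s\<bar> < d \<longrightarrow>
            norm (f u - f s - (u - s) *\<^sub>R f' s) \<le> e * \<bar>u - s\<bar>"
proof -
  have "uniformly_continuous_on {a..b} f'"
    using cont by (intro compact_uniformly_continuous) auto
  then obtain d where d: "d > 0" "\<And>x x'. x \<in> {a..b} \<Longrightarrow> x' \<in> {a..b} \<Longrightarrow> dist x' x < d \<Longrightarrow> dist (f' x') (f' x) < e"
    unfolding uniformly_continuous_on_def using e by metis
  show ?thesis
  proof (intro exI[of _ d] conjI allI impI)
    show "d > 0" by fact
    fix s u assume s: "s \<in> {a..b}" and u: "u \<in> {a..b}" and su: "\<bar>u - s\<bar> < d"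
    define c where "c = min s u"
    define c' where "c' = max s u"
    have sub: "{c..c'} \<subseteq> {a..b}" using s u by (auto simp: c_def c'_def)
    let ?g = "\<lambda>v. f v - v *\<^sub>R f' s"
    have "norm (?g u - ?g s) \<le> e * \<bar>u - s\<bar>"
    proof (rule mvt_bound[where f'="\<lambda>v. f' v - f' s"])
      fix v assume v: "v \<in> {c..c'}"
      have "(f has_vector_derivative f' v) (at v within {c..c'})"
        using der v sub by (meson has_vector_derivative_within_subset subsetD)
      then show "(?g has_vector_derivative f' v - f' s) (at v within {c..c'})"
        by (auto intro!: derivative_eq_intros)
      have "dist v s < d" using v su by (auto simp: c_def c'_def dist_real_def)
      then have "dist (f' v) (f' s) < e" using d(2)[of s v] v sub s by auto
      then show "norm (f' v - f' s) \<le> e" by (simp add: dist_norm)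
    qed (auto simp: c_def c'_def)
    then show "norm (f u - f s - (u - s) *\<^sub>R f' s) \<le> e * \<bar>u - s\<bar>"
      by (simp add: algebra_simps)
  qed
qed

locale ops =
  fixes a b :: real and N :: nat and \<gamma> :: "int \<Rightarrow> complex"
  assumes ab: "a < b" and N1: "N \<ge> 1"
begin

definition Sp :: "real \<Rightarrow> (real \<Rightarrow> complex) \<Rightarrow> real \<Rightarrow> complex" where
  "Sp h f s = (\<Sum>l\<in>{- int N..int N}. \<gamma> l / of_real h * f (s + of_int l * h))"

definition G1 :: real where "G1 = (\<Sum>l\<in>{- int N..int N}. norm (\<gamma> l) * \<bar>of_int l\<bar>)"

lemma G1_nonneg: "G1 \<ge> 0" unfolding G1_def by (intro sum_nonneg) auto

lemma lh_bound:
  assumes "l \<in> {- int N..int N}"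
  shows "\<bar>of_int l * h\<bar> \<le> real N * \<bar>h\<bar>"
proof -
  have "\<bar>of_int l :: real\<bar> \<le> real N" using assms by auto
  then show ?thesis by (simp add: abs_mult mult_right_mono)
qed

lemma chi_one:
  assumes "0 < h" "\<bar>l\<bar> \<le> int N" "a + real N * h \<le> s" "s \<le> b - real N * h"
  shows "chi a b h l s = 1"
proof -
  have "\<bar>of_int l * h\<bar> \<le> real N * h"
    using lh_bound[of l h] assms by (auto simp: abs_le_iff)
  then show ?thesis using assms unfolding chi_def by auto
qed

lemma boxp_Sp:
  assumes "0 < h" "a + real N * h \<le> s" "s \<le> b - real N * h"
  shows "boxp a b N \<gamma> h f s = Sp h f s"
  unfolding boxp_def Sp_def
  by (intro sum.cong refl) (use assms chi_one[of h] in auto)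

lemma boxm_Sp:
  assumes "0 < h" "a + real N * h \<le> s" "s \<le> b - real N * h"
  shows "boxm a b N \<gamma> h f s = - Sp (- h) f s"
proof -
  have "boxm a b N \<gamma> h f s = (\<Sum>l\<in>{- int N..int N}. \<gamma> l / of_real h * f (s - of_int l * h))"
    unfolding boxm_def by (intro sum.cong refl) (use assms chi_one[of h] in auto)
  also have "\<dots> = - Sp (- h) f s"
    unfolding Sp_def by (simp add: sum_negf[symmetric])
  finally show ?thesis .
qed

lemma Sp_err:
  assumes S0: "(\<Sum>l\<in>{- int N..int N}. \<gamma> l) = 0" and S1: "(\<Sum>l\<in>{- int N..int N}. of_int l * \<gamma> l) = 1"
    and h: "h \<noteq> 0"
  shows "Sp h f s - d = (\<Sum>l\<in>{- int N..int N}. \<gamma> l / of_real h * (f (s + of_int l * h) - f s - (of_int l * h) *\<^sub>R d))"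
proof -
  have A: "(\<Sum>l\<in>{- int N..int N}. \<gamma> l / of_real h * f s) = 0"
    using S0 by (simp add: sum_distrib_right[symmetric] sum_divide_distrib[symmetric])
  have B: "(\<Sum>l\<in>{- int N..int N}. \<gamma> l / of_real h * ((of_int l * h) *\<^sub>R d)) = d"
  proof -
    have "(\<Sum>l\<in>{- int N..int N}. \<gamma> l / of_real h * ((of_int l * h) *\<^sub>R d))
        = (\<Sum>l\<in>{- int N..int N}. (of_int l * \<gamma> l) * d)"
      using h by (intro sum.cong refl) (simp add: scaleR_conv_of_real field_simps)
    also have "\<dots> = d" using S1 by (simp add: sum_distrib_right[symmetric])
    finally show ?thesis .
  qed
  show ?thesis
    unfolding Sp_def using A B by (simp add: ring_distribs sum_subtractf)
qed

lemma SpE: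
  assumes S0: "(\<Sum>l\<in>{- int N..int N}. \<gamma> l) = 0" and S1: "(\<Sum>l\<in>{- int N..int N}. of_int l * \<gamma> l) = 1"
    and der: "\<forall>t\<in>{a..b}. (f has_vector_derivative f' t) (at t within {a..b})"
    and cont: "continuous_on {a..b} f'" and e: "e > 0"
  shows "\<exists>d>0. \<forall>h s. h \<noteq> 0 \<and> \<bar>h\<bar> < d \<and> a \<le> s - real N * \<bar>h\<bar> \<and> s + real N * \<bar>h\<bar> \<le> b \<longrightarrow>
            norm (Sp h f s - f' s) \<le> e"
proof -
  define e' where "e' = e / (G1 + 1)"
  have e': "e' > 0" using e G1_nonneg by (simp add: e'_def)
  obtain d0 where d0: "d0 > 0" "\<forall>s u. s \<in> {a..b} \<longrightarrow> u \<in> {a..b} \<longrightarrow> \<bar>u - s\<bar> < d0 \<longrightarrow>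
            norm (f u - f s - (u - s) *\<^sub>R f' s) \<le> e' * \<bar>u - s\<bar>"
    using FO[OF der cont e'] by blast
  have Npos: "real N > 0" using N1 by simp
  show ?thesis
  proof (intro exI[of _ "d0 / real N"] conjI allI impI)
    show "d0 / real N > 0" using d0 Npos by simp
    fix h s assume H: "h \<noteq> 0 \<and> \<bar>h\<bar> < d0 / real N \<and> a \<le> s - real N * \<bar>h\<bar> \<and> s + real N * \<bar>h\<bar> \<le> b"
    have Nh: "real N * \<bar>h\<bar> < d0" using H Npos by (simp add: field_simps)
    have "norm (Sp h f s - f' s) = norm (\<Sum>l\<in>{- int N..int N}. \<gamma> l / of_real h * (f (s + of_int l * h) - f s - (of_int l * h) *\<^sub>R f' s))"
      using Sp_err[OF S0 S1] H by simp
    also have "\<dots> \<le> (\<Sum>l\<in>{- int N..int N}. norm (\<gamma> l / of_real h * (f (s + of_int l * h) - f s - (of_int l * h) *\<^sub>R f' s)))"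
      by (rule norm_sum)
    also have "\<dots> \<le> (\<Sum>l\<in>{- int N..int N}. e' * (norm (\<gamma> l) * \<bar>of_int l\<bar>))"
    proof (rule sum_mono)
      fix l assume l: "l \<in> {- int N..int N}"
      have lb: "\<bar>of_int l * h\<bar> \<le> real N * \<bar>h\<bar>" by (rule lh_bound[OF l])
      have s: "s \<in> {a..b}" using H Npos by (auto intro: order_trans[of _ "s - real N * \<bar>h\<bar>"] order_trans[of _ "s + real N * \<bar>h\<bar>"])
      have u: "s + of_int l * h \<in> {a..b}" using H lb by auto
      have "norm (f (s + of_int l * h) - f s - (of_int l * h) *\<^sub>R f' s) \<le> e' * \<bar>of_int l * h\<bar>"
        using d0(2)[rule_format, OF s u] lb Nh by simp
      then have "norm (\<gamma> l / of_real h * (f (s + of_int l * h) - f s - (of_int l * h) *\<^sub>R f' s))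
          \<le> norm (\<gamma> l) / \<bar>h\<bar> * (e' * \<bar>of_int l * h\<bar>)"
        by (simp add: norm_mult norm_divide mult_left_mono divide_right_mono)
      also have "\<dots> = e' * (norm (\<gamma> l) * \<bar>of_int l\<bar>)"
        using H by (simp add: abs_mult field_simps)
      finally show "norm (\<gamma> l / of_real h * (f (s + of_int l * h) - f s - (of_int l * h) *\<^sub>R f' s))
          \<le> e' * (norm (\<gamma> l) * \<bar>of_int l\<bar>)" .
    qed
    also have "\<dots> = e' * G1" by (simp add: G1_def sum_distrib_left)
    also have "\<dots> \<le> e" using e G1_nonneg by (simp add: e'_def field_simps)
    finally show "norm (Sp h f s - f' s) \<le> e" .
  qed
qed

end


lemma shift_der:
  fixes x :: "real \<Rightarrow> 'b::real_normed_vector"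
  assumes der: "\<forall>t\<in>{a..b}. (x has_vector_derivative x' t) (at t within {a..b})"
    and T: "\<And>w. w \<in> T \<Longrightarrow> w + c \<in> {a..b}" and v: "v \<in> T"
  shows "((\<lambda>w. x (w + c)) has_vector_derivative x' (v + c)) (at v within T)"
proof -
  have 1: "((\<lambda>w. w + c) has_vector_derivative 1) (at v within T)"
    by (auto intro!: derivative_eq_intros)
  have sub: "(\<lambda>w. w + c) ` T \<subseteq> {a..b}" using T by auto
  have 2: "(x has_vector_derivative x' (v + c)) (at (v + c) within (\<lambda>w. w + c) ` T)"
    using der T[OF v] sub by (meson has_vector_derivative_within_subset)
  show ?thesis using vector_diff_chain_within[OF 1 2] by (simp add: o_def)
qed

lemma bound_on:
  fixes f :: "real \<Rightarrow> 'b::real_normed_vector"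
  assumes "continuous_on {a..b} f"
  obtains M where "M > 0" "\<And>t. t \<in> {a..b} \<Longrightarrow> norm (f t) \<le> M"
proof -
  have "compact (f ` {a..b})" using assms by (intro compact_continuous_image) auto
  then have "bounded (f ` {a..b})" by (rule compact_imp_bounded)
  then show ?thesis using that by (auto simp: bounded_pos)
qed

context ops begin

lemma P1:
  assumes S0: "(\<Sum>l\<in>{- int N..int N}. \<gamma> l) = 0" and S1: "(\<Sum>l\<in>{- int N..int N}. of_int l * \<gamma> l) = 1"
    and der: "\<forall>t\<in>{a..b}. (f has_vector_derivative f' t) (at t within {a..b})"
    and cont: "continuous_on {a..b} f'" and \<delta>: "\<delta> > 0"
  shows "uniform_limit {a+\<delta>..b-\<delta>} (\<lambda>h t. boxp a b N \<gamma> h f t) f' (at_right 0)"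
proof (rule ulim_at_rightI)
  fix e :: real assume e: "e > 0"
  obtain d where d: "d > 0" "\<forall>h s. h \<noteq> 0 \<and> \<bar>h\<bar> < d \<and> a \<le> s - real N * \<bar>h\<bar> \<and> s + real N * \<bar>h\<bar> \<le> b \<longrightarrow>
            norm (Sp h f s - f' s) \<le> e"
    using SpE[OF S0 S1 der cont e] by blast
  have Npos: "real N > 0" using N1 by simp
  show "\<exists>d>0. \<forall>h t. 0 < h \<and> h < d \<and> t \<in> {a+\<delta>..b-\<delta>} \<longrightarrow> dist (boxp a b N \<gamma> h f t) (f' t) \<le> e"
  proof (intro exI[of _ "min d (\<delta> / real N)"] conjI allI impI)
    show "min d (\<delta> / real N) > 0" using d \<delta> Npos by simp
    fix h t assume H: "0 < h \<and> h < min d (\<delta> / real N) \<and> t \<in> {a+\<delta>..b-\<delta>}"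
    have Nh: "real N * h < \<delta>" using H Npos by (simp add: field_simps)
    have "boxp a b N \<gamma> h f t = Sp h f t" using H Nh by (intro boxp_Sp) auto
    moreover have "norm (Sp h f t - f' t) \<le> e" using d(2) H Nh by auto
    ultimately show "dist (boxp a b N \<gamma> h f t) (f' t) \<le> e" by (simp add: dist_norm)
  qed
qed

lemma M1:
  assumes S0: "(\<Sum>l\<in>{- int N..int N}. \<gamma> l) = 0" and S1: "(\<Sum>l\<in>{- int N..int N}. of_int l * \<gamma> l) = 1"
    and der: "\<forall>t\<in>{a..b}. (f has_vector_derivative f' t) (at t within {a..b})"
    and cont: "continuous_on {a..b} f'" and \<delta>: "\<delta> > 0"
  shows "uniform_limit {a+\<delta>..b-\<delta>} (\<lambda>h t. boxm a b N \<gamma> h f t) (\<lambda>t. - f' t) (at_right 0)"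
proof (rule ulim_at_rightI)
  fix e :: real assume e: "e > 0"
  obtain d where d: "d > 0" "\<forall>h s. h \<noteq> 0 \<and> \<bar>h\<bar> < d \<and> a \<le> s - real N * \<bar>h\<bar> \<and> s + real N * \<bar>h\<bar> \<le> b \<longrightarrow>
            norm (Sp h f s - f' s) \<le> e"
    using SpE[OF S0 S1 der cont e] by blast
  have Npos: "real N > 0" using N1 by simp
  show "\<exists>d>0. \<forall>h t. 0 < h \<and> h < d \<and> t \<in> {a+\<delta>..b-\<delta>} \<longrightarrow> dist (boxm a b N \<gamma> h f t) (- f' t) \<le> e"
  proof (intro exI[of _ "min d (\<delta> / real N)"] conjI allI impI)
    show "min d (\<delta> / real N) > 0" using d \<delta> Npos by simp
    fix h t assume H: "0 < h \<and> h < min d (\<delta> / real N) \<and> t \<in> {a+\<delta>..b-\<delta>}"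
    have Nh: "real N * h < \<delta>" using H Npos by (simp add: field_simps)
    have "boxm a b N \<gamma> h f t = - Sp (- h) f t" using H Nh by (intro boxm_Sp) auto
    moreover have "norm (Sp (- h) f t - f' t) \<le> e" using d(2)[rule_format, of "-h" t] H Nh by auto
    ultimately show "dist (boxm a b N \<gamma> h f t) (- f' t) \<le> e"
      by (simp add: dist_norm norm_minus_commute)
  qed
qed

end


context ops begin

lemma Sp_der:
  assumes der: "\<forall>t\<in>{a..b}. (x has_vector_derivative x' t) (at t within {a..b})"
    and T: "\<And>w l. w \<in> T \<Longrightarrow> l \<in> {- int N..int N} \<Longrightarrow> w + of_int l * h \<in> {a..b}" and v: "v \<in> T"
  shows "(Sp h x has_vector_derivative Sp h x' v) (at v within T)"
proof -
  have "((\<lambda>w. \<Sum>l\<in>{- int N..int N}. \<gamma> l / of_real h * x (w + of_int l * h)) has_vector_derivative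
        (\<Sum>l\<in>{- int N..int N}. \<gamma> l / of_real h * x' (v + of_int l * h))) (at v within T)"
    by (intro has_vector_derivative_sum has_vector_derivative_mult_right shift_der[OF der _ v]) (use T in auto)
  then show ?thesis by (simp add: Sp_def[abs_def])
qed

lemma M2:
  assumes S0: "(\<Sum>l\<in>{- int N..int N}. \<gamma> l) = 0" and S1: "(\<Sum>l\<in>{- int N..int N}. of_int l * \<gamma> l) = 1"
    and derp: "\<forall>t\<in>{a..b}. (p has_vector_derivative p' t) (at t within {a..b})"
    and contp: "continuous_on {a..b} p'"
    and derx: "\<forall>t\<in>{a..b}. (x has_vector_derivative x' t) (at t within {a..b})"
    and derx': "\<forall>t\<in>{a..b}. (x' has_vector_derivative x'' t) (at t within {a..b})"
    and contx: "continuous_on {a..b} x''" and \<delta>: "\<delta> > 0"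
  shows "uniform_limit {a+\<delta>..b-\<delta>} (\<lambda>h t. boxm a b N \<gamma> h (\<lambda>s. p s * boxp a b N \<gamma> h x s) t)
           (\<lambda>t. - (p' t * x' t + p t * x'' t)) (at_right 0)"
proof (rule ulim_at_rightI)
  fix e :: real assume e: "e > 0"
  have cp: "continuous_on {a..b} p" using derp by (intro continuous_on_vector_derivative) auto
  have cx': "continuous_on {a..b} x'" using derx' by (intro continuous_on_vector_derivative) auto
  obtain Mp where Mp: "Mp > 0" "\<And>t. t \<in> {a..b} \<Longrightarrow> norm (p t) \<le> Mp" using bound_on[OF cp] by blast
  obtain Mp' where Mp': "Mp' > 0" "\<And>t. t \<in> {a..b} \<Longrightarrow> norm (p' t) \<le> Mp'" using bound_on[OF contp] by blast
  define e1 where "e1 = e / (2 * (G1 + 1) * (Mp + Mp'))"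
  have e1: "e1 > 0" using e G1_nonneg Mp Mp' by (simp add: e1_def)
  have derpx: "\<forall>t\<in>{a..b}. ((\<lambda>s. p s * x' s) has_vector_derivative (p' t * x' t + p t * x'' t)) (at t within {a..b})"
    using derp derx' by (auto intro!: derivative_eq_intros simp: algebra_simps)
  have contpx: "continuous_on {a..b} (\<lambda>t. p' t * x' t + p t * x'' t)"
    by (intro continuous_intros contp cx' cp contx)
  have e2: "e / 2 > 0" using e by simp
  obtain dA where dA: "dA > 0" "\<forall>h s. h \<noteq> 0 \<and> \<bar>h\<bar> < dA \<and> a \<le> s - real N * \<bar>h\<bar> \<and> s + real N * \<bar>h\<bar> \<le> b \<longrightarrow>
            norm (Sp h (\<lambda>s. p s * x' s) s - (p' s * x' s + p s * x'' s)) \<le> e / 2"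
    using SpE[OF S0 S1 derpx contpx e2] by blast
  obtain dx where dx: "dx > 0" "\<forall>h s. h \<noteq> 0 \<and> \<bar>h\<bar> < dx \<and> a \<le> s - real N * \<bar>h\<bar> \<and> s + real N * \<bar>h\<bar> \<le> b \<longrightarrow>
            norm (Sp h x s - x' s) \<le> e1"
    using SpE[OF S0 S1 derx cx' e1] by blast
  obtain dx' where dx': "dx' > 0" "\<forall>h s. h \<noteq> 0 \<and> \<bar>h\<bar> < dx' \<and> a \<le> s - real N * \<bar>h\<bar> \<and> s + real N * \<bar>h\<bar> \<le> b \<longrightarrow>
            norm (Sp h x' s - x'' s) \<le> e1"
    using SpE[OF S0 S1 derx' contx e1] by blast
  have Npos: "real N > 0" using N1 by simp
  define d where "d = min (min dA dx) (min dx' (\<delta> / (2 * real N)))"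
  show "\<exists>d>0. \<forall>h t. 0 < h \<and> h < d \<and> t \<in> {a+\<delta>..b-\<delta>} \<longrightarrow>
     dist (boxm a b N \<gamma> h (\<lambda>s. p s * boxp a b N \<gamma> h x s) t) (- (p' t * x' t + p t * x'' t)) \<le> e"
  proof (intro exI[of _ d] conjI allI impI)
    show "d > 0" using dA dx dx' \<delta> Npos by (simp add: d_def)
    fix h t assume H: "0 < h \<and> h < d \<and> t \<in> {a+\<delta>..b-\<delta>}"
    have h: "0 < h" using H by simp
    have Nh: "2 * real N * h < \<delta>" using H Npos by (simp add: d_def field_simps)
    have t: "a + \<delta> \<le> t" "t \<le> b - \<delta>" using H by auto
    have Nh0: "0 \<le> real N * h" using h by simp
    define r where "r = (\<lambda>s. Sp h x s - x' s)"
    define W where "W = {t - real N * h .. t + real N * h}"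
    have Wab: "\<And>w l. w \<in> W \<Longrightarrow> l \<in> {- int N..int N} \<Longrightarrow> w + of_int l * h \<in> {a..b}"
    proof -
      fix w l assume w: "w \<in> W" and l: "l \<in> {- int N..int N}"
      have "\<bar>of_int l * h\<bar> \<le> real N * h" using lh_bound[OF l, of h] h by simp
      then show "w + of_int l * h \<in> {a..b}" using w t Nh unfolding W_def by (auto simp: abs_le_iff)
    qed
    have Wroom: "\<And>w. w \<in> W \<Longrightarrow> a \<le> w - real N * \<bar>h\<bar> \<and> w + real N * \<bar>h\<bar> \<le> b"
      using t Nh h unfolding W_def by auto
    have tW: "t \<in> W" using h Npos by (simp add: W_def)
    have ptW: "\<And>l. l \<in> {- int N..int N} \<Longrightarrow> t + of_int l * (- h) \<in> W"
    proof -
      fix l assume l: "l \<in> {- int N..int N}"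
      have "\<bar>of_int l * h\<bar> \<le> real N * h" using lh_bound[OF l, of h] h by simp
      then show "t + of_int l * (- h) \<in> W" unfolding W_def by (auto simp: abs_le_iff)
    qed
    have Wsub: "W \<subseteq> {a..b}" using Wab[of _ 0] by auto
    have eq1: "boxm a b N \<gamma> h (\<lambda>s. p s * boxp a b N \<gamma> h x s) t = - Sp (- h) (\<lambda>s. p s * Sp h x s) t"
    proof -
      have "boxm a b N \<gamma> h (\<lambda>s. p s * boxp a b N \<gamma> h x s) t = - Sp (- h) (\<lambda>s. p s * boxp a b N \<gamma> h x s) t"
        using t Nh h Nh0 by (intro boxm_Sp) linarith+
      also have "Sp (- h) (\<lambda>s. p s * boxp a b N \<gamma> h x s) t = Sp (- h) (\<lambda>s. p s * Sp h x s) t"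
        unfolding Sp_def[of "- h"]
      proof (intro sum.cong refl)
        fix l assume l: "l \<in> {- int N..int N}"
        have "boxp a b N \<gamma> h x (t + of_int l * - h) = Sp h x (t + of_int l * - h)"
          using ptW[OF l] Wroom[OF ptW[OF l]] h by (intro boxp_Sp) auto
        then show "\<gamma> l / of_real (- h) * (p (t + of_int l * - h) * boxp a b N \<gamma> h x (t + of_int l * - h)) =
                   \<gamma> l / of_real (- h) * (p (t + of_int l * - h) * Sp h x (t + of_int l * - h))" by simp
      qed
      finally show ?thesis .
    qed
    have eq2: "Sp (- h) (\<lambda>s. p s * Sp h x s) t = Sp (- h) (\<lambda>s. p s * x' s) t + Sp (- h) (\<lambda>s. p s * r s) t"
      unfolding Sp_def r_def by (simp add: sum.distrib[symmetric] algebra_simps)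
    have eq3: "Sp (- h) (\<lambda>s. p s * r s) t =
       (\<Sum>l\<in>{- int N..int N}. \<gamma> l / of_real (- h) * (p (t + of_int l * - h) * r (t + of_int l * - h) - p t * r t))"
    proof -
      have "(\<Sum>l\<in>{- int N..int N}. \<gamma> l / of_real (- h) * (p t * r t)) = (\<Sum>l\<in>{- int N..int N}. \<gamma> l) / of_real (- h) * (p t * r t)"
        by (simp only: sum_distrib_right sum_divide_distrib)
      then have "(\<Sum>l\<in>{- int N..int N}. \<gamma> l / of_real (- h) * (p t * r t)) = 0"
        using S0 by simp
      then show ?thesis unfolding Sp_def[of "- h"] by (simp only: right_diff_distrib sum_subtractf diff_zero)
    qed
    have rbound: "norm (r w) \<le> e1" if "w \<in> W" for w
      using dx(2)[rule_format, of h w] Wroom[OF that] h H by (auto simp: r_def d_def)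
    have rder: "\<And>v. v \<in> W \<Longrightarrow> (r has_vector_derivative (Sp h x' v - x'' v)) (at v within W)"
    proof -
      fix v assume v: "v \<in> W"
      have "(Sp h x has_vector_derivative Sp h x' v) (at v within W)" by (rule Sp_der[OF derx Wab v])
      moreover have "(x' has_vector_derivative x'' v) (at v within W)"
        using derx' v Wsub by (meson has_vector_derivative_within_subset subsetD)
      ultimately show "(r has_vector_derivative (Sp h x' v - x'' v)) (at v within W)"
        unfolding r_def[abs_def] by (rule has_vector_derivative_diff)
    qed
    have rdiff: "norm (r u - r t) \<le> e1 * \<bar>u - t\<bar>" if "u \<in> W" for u
    proof -
      let ?c = "min u t" and ?c' = "max u t"
      have sub: "{?c..?c'} \<subseteq> W" using that tW unfolding W_def by auto
      show ?thesis
      proof (rule mvt_bound[where f'="\<lambda>v. Sp h x' v - x'' v"])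
        fix v assume v: "v \<in> {?c..?c'}"
        show "(r has_vector_derivative Sp h x' v - x'' v) (at v within {?c..?c'})"
          using rder[of v] v sub by (meson has_vector_derivative_within_subset subsetD)
        show "norm (Sp h x' v - x'' v) \<le> e1"
          using dx'(2)[rule_format, of h v] Wroom[of v] v sub h H by (auto simp: d_def)
      qed auto
    qed
    have pdiff: "norm (p u - p t) \<le> Mp' * \<bar>u - t\<bar>" if "u \<in> W" for u
    proof -
      let ?c = "min u t" and ?c' = "max u t"
      have sub: "{?c..?c'} \<subseteq> {a..b}" using that tW Wsub unfolding W_def by auto
      show ?thesis
      proof (rule mvt_bound[where f'="p'"])
        fix v assume v: "v \<in> {?c..?c'}"
        show "(p has_vector_derivative p' v) (at v within {?c..?c'})"
          using derp v sub by (meson has_vector_derivative_within_subset subsetD)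
        have "v \<in> {a..b}" using v sub by blast
        then show "norm (p' v) \<le> Mp'" using Mp'(2) by blast
      qed auto
    qed
    have B: "norm (Sp (- h) (\<lambda>s. p s * r s) t) \<le> e / 2"
    proof -
      have "norm (Sp (- h) (\<lambda>s. p s * r s) t) \<le>
          (\<Sum>l\<in>{- int N..int N}. norm (\<gamma> l / of_real (- h) * (p (t + of_int l * - h) * r (t + of_int l * - h) - p t * r t)))"
        unfolding eq3 by (rule norm_sum)
      also have "\<dots> \<le> (\<Sum>l\<in>{- int N..int N}. e1 * (Mp + Mp') * (norm (\<gamma> l) * \<bar>of_int l\<bar>))"
      proof (rule sum_mono)
        fix l assume l: "l \<in> {- int N..int N}"
        define u where "u = t + of_int l * - h"
        have uW: "u \<in> W" using ptW[OF l] by (simp add: u_def)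
        have ut: "\<bar>u - t\<bar> = \<bar>of_int l\<bar> * h" using h by (simp add: u_def abs_mult)
        have "norm (p u * r u - p t * r t) = norm ((p u - p t) * r u + p t * (r u - r t))"
          by (simp add: algebra_simps)
        also have "\<dots> \<le> norm (p u - p t) * norm (r u) + norm (p t) * norm (r u - r t)"
          by (rule order_trans[OF norm_triangle_ineq]) (simp add: norm_mult)
        also have "\<dots> \<le> (Mp' * \<bar>u - t\<bar>) * e1 + Mp * (e1 * \<bar>u - t\<bar>)"
          using pdiff[OF uW] rbound[OF uW] rdiff[OF uW] Mp(2)[of t] tW Wsub Mp Mp' e1
          by (intro add_mono mult_mono) auto
        also have "\<dots> = e1 * (Mp + Mp') * \<bar>of_int l\<bar> * h" using ut by (simp add: algebra_simps)
        finally have X: "norm (p u * r u - p t * r t) \<le> e1 * (Mp + Mp') * \<bar>of_int l\<bar> * h" .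
        have "norm (\<gamma> l / of_real (- h) * (p u * r u - p t * r t)) = norm (\<gamma> l) / h * norm (p u * r u - p t * r t)"
          using h by (simp add: norm_mult norm_divide)
        also have "\<dots> \<le> norm (\<gamma> l) / h * (e1 * (Mp + Mp') * \<bar>of_int l\<bar> * h)"
          using X h by (intro mult_left_mono) auto
        also have "\<dots> = e1 * (Mp + Mp') * (norm (\<gamma> l) * \<bar>of_int l\<bar>)" using h by simp
        finally show "norm (\<gamma> l / of_real (- h) * (p (t + of_int l * - h) * r (t + of_int l * - h) - p t * r t))
            \<le> e1 * (Mp + Mp') * (norm (\<gamma> l) * \<bar>of_int l\<bar>)" by (simp add: u_def)
      qed
      also have "\<dots> = e1 * (Mp + Mp') * G1" by (simp add: G1_def sum_distrib_left)
      also have "\<dots> \<le> e / 2"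
      proof -
        have "e1 * (Mp + Mp') * G1 = e / 2 * (G1 / (G1 + 1))"
        proof -
          have "Mp + Mp' \<noteq> 0" "G1 + 1 \<noteq> 0" using Mp Mp' G1_nonneg by auto
          then show ?thesis by (simp add: e1_def)
        qed
        also have "\<dots> \<le> e / 2 * 1" using e G1_nonneg by (intro mult_left_mono) auto
        finally show ?thesis by simp
      qed
      finally show ?thesis .
    qed
    have A: "norm (Sp (- h) (\<lambda>s. p s * x' s) t - (p' t * x' t + p t * x'' t)) \<le> e / 2"
      using dA(2)[rule_format, of "-h" t] Wroom[OF tW] h H by (auto simp: d_def)
    have "dist (boxm a b N \<gamma> h (\<lambda>s. p s * boxp a b N \<gamma> h x s) t) (- (p' t * x' t + p t * x'' t))
        = norm ((Sp (- h) (\<lambda>s. p s * x' s) t - (p' t * x' t + p t * x'' t)) + Sp (- h) (\<lambda>s. p s * r s) t)"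
      unfolding eq1 eq2 dist_norm by (simp add: norm_minus_commute algebra_simps)
    also have "\<dots> \<le> e / 2 + e / 2" using A B by (rule order_trans[OF norm_triangle_ineq add_mono])
    finally show "dist (boxm a b N \<gamma> h (\<lambda>s. p s * boxp a b N \<gamma> h x s) t) (- (p' t * x' t + p t * x'' t)) \<le> e"
      by simp
  qed
qed

end


lemma ev_const_lim:
  fixes f :: "real \<Rightarrow> 'b::t2_space"
  assumes "(f \<longlongrightarrow> L) (at_right 0)" "eventually (\<lambda>h. f h = c) (at_right 0)"
  shows "c = L"
proof -
  have "((\<lambda>h::real. c) \<longlongrightarrow> L) (at_right 0)" using assms(1) tendsto_cong[OF assms(2), of L] by simp
  then show ?thesis by (simp add: tendsto_const_iff)
qed

context ops begin

lemma pt_limit: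
  assumes "loc_unif_conv a b F G"
  shows "((\<lambda>h. F h ((a+b)/2)) \<longlongrightarrow> G ((a+b)/2)) (at_right 0)"
proof -
  have "uniform_limit {a + (b-a)/4..b - (b-a)/4} F G (at_right 0)"
    using assms ab unfolding loc_unif_conv_def by auto
  then have "uniform_limit {(a+b)/2} F G (at_right 0)"
    by (rule uniform_limit_on_subset) (use ab in \<open>auto simp: field_simps\<close>)
  then show ?thesis by simp
qed

lemma ev_small:
  "eventually (\<lambda>h. 0 < h \<and> a + real N * h \<le> (a+b)/2 \<and> (a+b)/2 \<le> b - real N * h) (at_right 0)"
proof -
  have Npos: "real N > 0" using N1 by simp
  show ?thesis unfolding eventually_at_right_field
    using ab Npos by (intro exI[of _ "(b-a)/(4 * real N)"]) (auto simp: field_simps)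
qed

lemma Sp_1: "Sp h (\<lambda>s. 1) t = (\<Sum>l\<in>{- int N..int N}. \<gamma> l) / of_real h"
  unfolding Sp_def by (simp add: sum_divide_distrib)

lemma Sp_id: assumes h: "h \<noteq> 0"
  shows "Sp h (\<lambda>s. of_real s) t = (\<Sum>l\<in>{- int N..int N}. \<gamma> l) / of_real h * of_real t + (\<Sum>l\<in>{- int N..int N}. of_int l * \<gamma> l)"
proof -
  have "Sp h (\<lambda>s. of_real s) t = (\<Sum>l\<in>{- int N..int N}. \<gamma> l / of_real h * of_real t + of_int l * \<gamma> l)"
    unfolding Sp_def by (intro sum.cong refl) (use h in \<open>simp add: field_simps\<close>)
  then show ?thesis by (simp only: sum_divide_distrib sum_distrib_right sum.distrib)
qed

lemma Dp_E:
  assumes "loc_unif_conv a b (\<lambda>h t. boxp a b N \<gamma> h (\<lambda>s. 1) t) (\<lambda>t. 0)"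
    and "loc_unif_conv a b (\<lambda>h t. boxp a b N \<gamma> h (\<lambda>s. complex_of_real s) t) (\<lambda>t. 1)"
  shows "(\<Sum>l\<in>{- int N..int N}. \<gamma> l) = 0 \<and> (\<Sum>l\<in>{- int N..int N}. of_int l * \<gamma> l) = 1"
proof -
  let ?t = "(a+b)/2"
  have L1: "((\<lambda>h. boxp a b N \<gamma> h (\<lambda>s. 1) ?t) \<longlongrightarrow> 0) (at_right 0)" using pt_limit[OF assms(1)] by simp
  have "((\<lambda>h. of_real h * boxp a b N \<gamma> h (\<lambda>s. 1) ?t) \<longlongrightarrow> of_real 0 * 0) (at_right 0)"
    by (intro tendsto_mult L1 tendsto_of_real tendsto_ident_at)
  then have L1': "((\<lambda>h. of_real h * boxp a b N \<gamma> h (\<lambda>s. 1) ?t) \<longlongrightarrow> 0) (at_right 0)" by simp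
  have S0: "(\<Sum>l\<in>{- int N..int N}. \<gamma> l) = 0"
  proof (rule ev_const_lim[OF L1'])
    show "\<forall>\<^sub>F h in at_right 0. of_real h * boxp a b N \<gamma> h (\<lambda>s. 1) ?t = (\<Sum>l\<in>{- int N..int N}. \<gamma> l)"
      using ev_small by (rule eventually_mono) (auto simp: Sp_1 boxp_Sp[of _ ?t])
  qed
  have L2: "((\<lambda>h. boxp a b N \<gamma> h (\<lambda>s. complex_of_real s) ?t) \<longlongrightarrow> 1) (at_right 0)" using pt_limit[OF assms(2)] by simp
  have S1: "(\<Sum>l\<in>{- int N..int N}. of_int l * \<gamma> l) = 1"
  proof (rule ev_const_lim[OF L2])
    show "\<forall>\<^sub>F h in at_right 0. boxp a b N \<gamma> h (\<lambda>s. complex_of_real s) ?t = (\<Sum>l\<in>{- int N..int N}. of_int l * \<gamma> l)"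
      using ev_small by (rule eventually_mono) (auto simp: Sp_id S0 boxp_Sp[of _ ?t])
  qed
  show ?thesis using S0 S1 by simp
qed

lemma Dm_E:
  assumes "loc_unif_conv a b (\<lambda>h t. boxm a b N \<gamma> h (\<lambda>s. 1) t) (\<lambda>t. 0)"
    and "loc_unif_conv a b (\<lambda>h t. boxm a b N \<gamma> h (\<lambda>s. complex_of_real s) t) (\<lambda>t. -1)"
  shows "(\<Sum>l\<in>{- int N..int N}. \<gamma> l) = 0 \<and> (\<Sum>l\<in>{- int N..int N}. of_int l * \<gamma> l) = 1"
proof -
  let ?t = "(a+b)/2"
  have L1: "((\<lambda>h. boxm a b N \<gamma> h (\<lambda>s. 1) ?t) \<longlongrightarrow> 0) (at_right 0)" using pt_limit[OF assms(1)] by simp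
  have "((\<lambda>h. of_real h * boxm a b N \<gamma> h (\<lambda>s. 1) ?t) \<longlongrightarrow> of_real 0 * 0) (at_right 0)"
    by (intro tendsto_mult L1 tendsto_of_real tendsto_ident_at)
  then have L1': "((\<lambda>h. of_real h * boxm a b N \<gamma> h (\<lambda>s. 1) ?t) \<longlongrightarrow> 0) (at_right 0)" by simp
  have S0: "(\<Sum>l\<in>{- int N..int N}. \<gamma> l) = 0"
  proof (rule ev_const_lim[OF L1'])
    show "\<forall>\<^sub>F h in at_right 0. of_real h * boxm a b N \<gamma> h (\<lambda>s. 1) ?t = (\<Sum>l\<in>{- int N..int N}. \<gamma> l)"
      using ev_small by (rule eventually_mono) (auto simp: Sp_1 boxm_Sp[of _ ?t])
  qed
  have L2: "((\<lambda>h. boxm a b N \<gamma> h (\<lambda>s. complex_of_real s) ?t) \<longlongrightarrow> -1) (at_right 0)" using pt_limit[OF assms(2)] by simp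
  have S1: "- (\<Sum>l\<in>{- int N..int N}. of_int l * \<gamma> l) = -1"
  proof (rule ev_const_lim[OF L2])
    show "\<forall>\<^sub>F h in at_right 0. boxm a b N \<gamma> h (\<lambda>s. complex_of_real s) ?t = - (\<Sum>l\<in>{- int N..int N}. of_int l * \<gamma> l)"
      using ev_small by (rule eventually_mono) (auto simp: Sp_id S0 boxm_Sp[of _ ?t])
  qed
  show ?thesis using S0 S1 by simp
qed

lemma E_D:
  assumes S0: "(\<Sum>l\<in>{- int N..int N}. \<gamma> l) = 0" and S1: "(\<Sum>l\<in>{- int N..int N}. of_int l * \<gamma> l) = 1"
  shows "loc_unif_conv a b (\<lambda>h t. boxp a b N \<gamma> h (\<lambda>s. 1) t) (\<lambda>t. 0)"
    and "loc_unif_conv a b (\<lambda>h t. boxp a b N \<gamma> h (\<lambda>s. complex_of_real s) t) (\<lambda>t. 1)"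
  unfolding loc_unif_conv_def
  by (auto intro!: P1[OF S0 S1] derivative_eq_intros continuous_intros)

end


lemma supp_sum:
  fixes f :: "int \<Rightarrow> 'a::comm_monoid_add"
  assumes "\<And>j. j \<notin> {-M..M} \<Longrightarrow> f j = 0" "{-M..M} \<subseteq> A" "finite A"
  shows "sum f A = sum f {-M..M}"
  using assms by (intro sum.mono_neutral_cong_right) auto

lemma shift_sum:
  fixes f :: "int \<Rightarrow> 'a::comm_monoid_add"
  assumes z: "\<And>j. j \<notin> {-M..M} \<Longrightarrow> f j = 0" and K: "M + \<bar>c\<bar> \<le> K"
  shows "(\<Sum>j\<in>{-K..K}. f (j + c)) = (\<Sum>j\<in>{-K..K}. f j)"
proof -
  have "(\<Sum>j\<in>{-K..K}. f (j + c)) = (\<Sum>j\<in>{-K+c..K+c}. f j)"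
    by (rule sum.reindex_bij_witness[of _ "\<lambda>j. j - c" "\<lambda>j. j + c"]) auto
  also have "\<dots> = sum f {-M..M}" using K by (intro supp_sum z) auto
  also have "\<dots> = (\<Sum>j\<in>{-K..K}. f j)" using K by (intro supp_sum[symmetric] z) auto
  finally show ?thesis .
qed

lemma neg_sum: "(\<Sum>l\<in>{-K..K::int}. g (- l)) = (\<Sum>m\<in>{-K..K}. g m)"
  by (rule sum.reindex_bij_witness[of _ uminus uminus]) auto

lemma second_diff_max:
  "(of_int (max (n + 1) 0) - 2 * of_int (max n 0) + of_int (max (n - 1) 0) :: complex) = (if n = 0 then 1 else 0)"
proof -
  consider "n > 0" | "n = 0" | "n < 0" by linarith
  then show ?thesis
  proof cases
    case 1 then have "max (n+1) 0 = n+1" "max n 0 = n" "max (n-1) 0 = n - 1" by auto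
    then show ?thesis using 1 by (simp add: algebra_simps)
  next
    case 2 then show ?thesis by simp
  next
    case 3 then have "max (n+1) 0 = 0" "max n 0 = 0" "max (n-1) 0 = 0" by auto
    then show ?thesis using 3 by simp
  qed
qed

context ops begin

definition dc :: "int \<Rightarrow> complex" where
  "dc i = \<gamma> i - (if i = 1 then 1 else 0) + (if i = 0 then 1 else 0)"

definition kap :: "int \<Rightarrow> complex" where
  "kap m = (\<Sum>i\<in>{- int N..int N}. of_int (max (m - i) 0) * dc i)"

lemma kap_2nd: "kap (m + 1) - 2 * kap m + kap (m - 1) = (if m \<in> {- int N..int N} then dc m else 0)"
proof -
  have "kap (m + 1) - 2 * kap m + kap (m - 1) =
      (\<Sum>i\<in>{- int N..int N}. (of_int (max ((m - i) + 1) 0) - 2 * of_int (max (m - i) 0) + of_int (max ((m - i) - 1) 0)) * dc i)"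
    unfolding kap_def by (simp add: sum_subtractf sum.distrib sum_distrib_left algebra_simps)
  also have "\<dots> = (\<Sum>i\<in>{- int N..int N}. if m = i then dc i else 0)"
    by (intro sum.cong refl) (simp only: second_diff_max, simp)
  also have "\<dots> = (if m \<in> {- int N..int N} then dc m else 0)"
    by (simp add: sum.delta)
  finally show ?thesis .
qed

lemma in_I: "0 \<in> {- int N..int N}" "1 \<in> {- int N..int N}" using N1 by auto

lemma kap_zero:
  assumes S0: "(\<Sum>l\<in>{- int N..int N}. \<gamma> l) = 0" and S1: "(\<Sum>l\<in>{- int N..int N}. of_int l * \<gamma> l) = 1"
    and m: "m \<notin> {-(int N - 1)..int N - 1}"
  shows "kap m = 0"
proof -
  have D0: "(\<Sum>i\<in>{- int N..int N}. dc i) = 0"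
    unfolding dc_def using S0 in_I by (simp add: sum.distrib sum_subtractf)
  have D1: "(\<Sum>i\<in>{- int N..int N}. of_int i * dc i) = 0"
  proof -
    have "\<And>i. of_int i * dc i = of_int i * \<gamma> i - (if i = 1 then 1 else 0)"
      by (simp add: dc_def algebra_simps)
    then have "(\<Sum>i\<in>{- int N..int N}. of_int i * dc i) = (\<Sum>i\<in>{- int N..int N}. of_int i * \<gamma> i - (if i = 1 then 1 else 0))"
      by simp
    also have "\<dots> = 0" using S1 in_I by (simp add: sum_subtractf)
    finally show ?thesis .
  qed
  consider "m \<ge> int N" | "m \<le> - int N" using m by force
  then show ?thesis
  proof cases
    case 1
    have "kap m = (\<Sum>i\<in>{- int N..int N}. of_int m * dc i - of_int i * dc i)"
      unfolding kap_def using 1 by (intro sum.cong refl) (auto simp: algebra_simps)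
    also have "\<dots> = of_int m * (\<Sum>i\<in>{- int N..int N}. dc i) - (\<Sum>i\<in>{- int N..int N}. of_int i * dc i)"
      by (simp add: sum_subtractf sum_distrib_left)
    finally show ?thesis using D0 D1 by simp
  next
    case 2
    show ?thesis unfolding kap_def using 2 by (intro sum.neutral) auto
  qed
qed

lemma alg:
  assumes S0: "(\<Sum>l\<in>{- int N..int N}. \<gamma> l) = 0" and S1: "(\<Sum>l\<in>{- int N..int N}. of_int l * \<gamma> l) = 1"
  shows "(\<Sum>l\<in>{- int N..int N}. \<gamma> l * Y l) = Y 1 - Y 0 +
     (\<Sum>l\<in>{-(int N - 1)..int N - 1}. kap (- l) * (Y (- l - 1) - 2 * Y (- l) + Y (- l + 1)))"
proof -
  define K where "K = int N + 2"
  define g where "g m = kap m * (Y (m - 1) - 2 * Y m + Y (m + 1))" for m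
  have kz: "\<And>m. m \<notin> {-(int N - 1)..int N - 1} \<Longrightarrow> kap m = 0" using kap_zero[OF S0 S1] by blast
  have kz': "\<And>m. m \<notin> {- int N.. int N} \<Longrightarrow> kap m = 0" using kz by auto
  have "(\<Sum>l\<in>{-(int N - 1)..int N - 1}. kap (- l) * (Y (- l - 1) - 2 * Y (- l) + Y (- l + 1)))
      = (\<Sum>l\<in>{-(int N - 1)..int N - 1}. g (- l))" by (simp add: g_def algebra_simps)
  also have "\<dots> = (\<Sum>l\<in>{-K..K}. g (- l))"
    by (rule supp_sum[symmetric]) (use kz in \<open>auto simp: g_def K_def\<close>)
  also have "\<dots> = (\<Sum>m\<in>{-K..K}. g m)" by (rule neg_sum)
  also have "\<dots> = (\<Sum>m\<in>{-K..K}. kap m * Y (m - 1)) - 2 * (\<Sum>m\<in>{-K..K}. kap m * Y m) + (\<Sum>m\<in>{-K..K}. kap m * Y (m + 1))"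
    by (simp add: g_def algebra_simps sum.distrib sum_subtractf sum_distrib_left)
  also have "(\<Sum>m\<in>{-K..K}. kap m * Y (m - 1)) = (\<Sum>m\<in>{-K..K}. kap (m + 1) * Y m)"
    using shift_sum[of "int N" "\<lambda>m. kap m * Y (m - 1)" 1 K] kz' by (simp add: K_def)
  also have "(\<Sum>m\<in>{-K..K}. kap m * Y (m + 1)) = (\<Sum>m\<in>{-K..K}. kap (m - 1) * Y m)"
    using shift_sum[of "int N" "\<lambda>m. kap m * Y (m + 1)" "-1" K] kz' by (simp add: K_def)
  also have "(\<Sum>m\<in>{-K..K}. kap (m + 1) * Y m) - 2 * (\<Sum>m\<in>{-K..K}. kap m * Y m) + (\<Sum>m\<in>{-K..K}. kap (m - 1) * Y m)
      = (\<Sum>m\<in>{-K..K}. (kap (m + 1) - 2 * kap m + kap (m - 1)) * Y m)"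
    by (simp add: algebra_simps sum.distrib sum_subtractf sum_distrib_left)
  also have "\<dots> = (\<Sum>m\<in>{-K..K}. (if m \<in> {- int N..int N} then dc m * Y m else 0))"
    by (intro sum.cong refl) (simp add: kap_2nd)
  also have "\<dots> = (\<Sum>m\<in>{- int N..int N}. dc m * Y m)"
    by (simp add: sum.inter_filter[symmetric] K_def) (intro sum.cong refl, auto)
  also have "\<dots> = (\<Sum>m\<in>{- int N..int N}. \<gamma> m * Y m) - Y 1 + Y 0"
  proof -
    have "\<And>m. dc m * Y m = \<gamma> m * Y m - (if m = 1 then Y 1 else 0) + (if m = 0 then Y 0 else 0)"
      by (simp add: dc_def algebra_simps)
    then have "(\<Sum>m\<in>{- int N..int N}. dc m * Y m) = (\<Sum>m\<in>{- int N..int N}. \<gamma> m * Y m - (if m = 1 then Y 1 else 0) + (if m = 0 then Y 0 else 0))"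
      by simp
    also have "\<dots> = (\<Sum>m\<in>{- int N..int N}. \<gamma> m * Y m) - Y 1 + Y 0"
      using in_I by (simp add: sum.distrib sum_subtractf)
    finally show ?thesis .
  qed
  finally show ?thesis by simp
qed

end


context ops begin

definition FS :: "(int \<Rightarrow> complex) \<Rightarrow> bool" where
  "FS k \<longleftrightarrow> (\<forall>\<epsilon>>0. \<forall>y t. t \<in> {a + 2 * real N * \<epsilon>..b - 2 * real N * \<epsilon>} \<longrightarrow>
     boxp a b N \<gamma> \<epsilon> y t = boxrs a b 1 0 \<epsilon> y t +
       (\<Sum>l\<in>{- (int N - 1)..int N - 1}. k (l + int N) * boxrs a b 1 (-1) \<epsilon> y (t - of_int l * \<epsilon>)))"

lemma rs_eval:
  assumes "\<epsilon> > 0" "a + \<epsilon> \<le> u" "u \<le> b - \<epsilon>"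
  shows "boxrs a b r s \<epsilon> y u = (- s * y (u - \<epsilon>) + (s - r) * y u + r * y (u + \<epsilon>)) / of_real \<epsilon>"
proof -
  have "chi a b \<epsilon> 1 u = 1" "chi a b \<epsilon> (-1) u = 1" using assms unfolding chi_def by auto
  moreover have "complex_of_real \<epsilon> \<noteq> 0" using assms by simp
  ultimately show ?thesis unfolding boxrs_def by (simp add: field_simps)
qed

lemma safe_u:
  assumes e: "\<epsilon> > 0" and t: "t \<in> {a + 2 * real N * \<epsilon>..b - 2 * real N * \<epsilon>}"
    and l: "l \<in> {- (int N - 1)..int N - 1}"
  shows "a + \<epsilon> \<le> t - of_int l * \<epsilon>" "t - of_int l * \<epsilon> \<le> b - \<epsilon>"
proof -
  have "\<bar>of_int l\<bar> \<le> real N - 1" using l N1 by auto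
  then have "\<bar>of_int l * \<epsilon>\<bar> \<le> (real N - 1) * \<epsilon>" using e by (simp add: abs_mult mult_right_mono)
  moreover have "(real N - 1) * \<epsilon> + \<epsilon> \<le> 2 * real N * \<epsilon>" using e N1 by (simp add: algebra_simps)
  ultimately show "a + \<epsilon> \<le> t - of_int l * \<epsilon>" "t - of_int l * \<epsilon> \<le> b - \<epsilon>" using t by (auto simp: abs_le_iff)
qed

lemma safe_t:
  assumes e: "\<epsilon> > 0" and t: "t \<in> {a + 2 * real N * \<epsilon>..b - 2 * real N * \<epsilon>}"
  shows "a + real N * \<epsilon> \<le> t" "t \<le> b - real N * \<epsilon>" "a + \<epsilon> \<le> t" "t \<le> b - \<epsilon>"
proof -
  have A: "real N * \<epsilon> \<le> 2 * real N * \<epsilon>" "\<epsilon> \<le> 2 * real N * \<epsilon>" using e N1 by auto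
  have B: "a + 2 * real N * \<epsilon> \<le> t" "t \<le> b - 2 * real N * \<epsilon>" using t by auto
  show "a + real N * \<epsilon> \<le> t" "t \<le> b - real N * \<epsilon>" "a + \<epsilon> \<le> t" "t \<le> b - \<epsilon>"
    using A B by linarith+
qed

lemma E_FS:
  assumes S0: "(\<Sum>l\<in>{- int N..int N}. \<gamma> l) = 0" and S1: "(\<Sum>l\<in>{- int N..int N}. of_int l * \<gamma> l) = 1"
  shows "FS (\<lambda>n. kap (int N - n))"
  unfolding FS_def
proof (intro allI impI)
  fix \<epsilon> :: real and y :: "real \<Rightarrow> complex" and t assume e: "\<epsilon> > 0" and t: "t \<in> {a + 2 * real N * \<epsilon>..b - 2 * real N * \<epsilon>}"
  define Y where "Y j = y (t + of_int j * \<epsilon>)" for j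
  have "boxp a b N \<gamma> \<epsilon> y t = Sp \<epsilon> y t" using safe_t[OF e t] e by (intro boxp_Sp) auto
  also have "\<dots> = (\<Sum>l\<in>{- int N..int N}. \<gamma> l * Y l) / of_real \<epsilon>"
    unfolding Sp_def Y_def by (simp add: sum_divide_distrib)
  also have "\<dots> = (Y 1 - Y 0 + (\<Sum>l\<in>{-(int N - 1)..int N - 1}. kap (- l) * (Y (- l - 1) - 2 * Y (- l) + Y (- l + 1)))) / of_real \<epsilon>"
    by (simp only: alg[OF S0 S1])
  also have "\<dots> = boxrs a b 1 0 \<epsilon> y t +
       (\<Sum>l\<in>{- (int N - 1)..int N - 1}. kap (int N - (l + int N)) * boxrs a b 1 (-1) \<epsilon> y (t - of_int l * \<epsilon>))"
  proof -
    have A: "boxrs a b 1 0 \<epsilon> y t = (Y 1 - Y 0) / of_real \<epsilon>"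
      using rs_eval[OF e safe_t(3,4)[OF e t]] by (simp add: Y_def)
    have B: "kap (int N - (l + int N)) * boxrs a b 1 (-1) \<epsilon> y (t - of_int l * \<epsilon>) =
        kap (- l) * (Y (- l - 1) - 2 * Y (- l) + Y (- l + 1)) / of_real \<epsilon>"
      if l: "l \<in> {- (int N - 1)..int N - 1}" for l
    proof -
      have "t - of_int l * \<epsilon> - \<epsilon> = t + of_int (- l - 1) * \<epsilon>" "t - of_int l * \<epsilon> = t + of_int (- l) * \<epsilon>"
           "t - of_int l * \<epsilon> + \<epsilon> = t + of_int (- l + 1) * \<epsilon>" by (simp_all add: algebra_simps)
      then show ?thesis using rs_eval[OF e safe_u[OF e t l]] by (simp add: Y_def algebra_simps)
    qed
    show ?thesis using A B by (simp add: add_divide_distrib sum_divide_distrib)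
  qed
  finally show "boxp a b N \<gamma> \<epsilon> y t = boxrs a b 1 0 \<epsilon> y t +
       (\<Sum>l\<in>{- (int N - 1)..int N - 1}. kap (int N - (l + int N)) * boxrs a b 1 (-1) \<epsilon> y (t - of_int l * \<epsilon>))" .
qed

lemma FS_E:
  assumes F1: "\<forall>\<epsilon>>0. \<forall>t. t \<in> {a + 2 * real N * \<epsilon>..b - 2 * real N * \<epsilon>} \<longrightarrow>
     boxp a b N \<gamma> \<epsilon> (\<lambda>s. 1) t = boxrs a b 1 0 \<epsilon> (\<lambda>s. 1) t +
       (\<Sum>l\<in>{- (int N - 1)..int N - 1}. k (l + int N) * boxrs a b 1 (-1) \<epsilon> (\<lambda>s. 1) (t - of_int l * \<epsilon>))"
   and F2: "\<forall>\<epsilon>>0. \<forall>t. t \<in> {a + 2 * real N * \<epsilon>..b - 2 * real N * \<epsilon>} \<longrightarrow>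
     boxp a b N \<gamma> \<epsilon> (\<lambda>s. of_real s) t = boxrs a b 1 0 \<epsilon> (\<lambda>s. of_real s) t +
       (\<Sum>l\<in>{- (int N - 1)..int N - 1}. k (l + int N) * boxrs a b 1 (-1) \<epsilon> (\<lambda>s. of_real s) (t - of_int l * \<epsilon>))"
  shows "(\<Sum>l\<in>{- int N..int N}. \<gamma> l) = 0 \<and> (\<Sum>l\<in>{- int N..int N}. of_int l * \<gamma> l) = 1"
proof -
  define \<epsilon> where "\<epsilon> = (b - a) / (4 * real N)"
  define t where "t = (a + b) / 2"
  have Npos: "real N > 0" using N1 by simp
  have e: "\<epsilon> > 0" using ab Npos by (simp add: \<epsilon>_def)
  have t: "t \<in> {a + 2 * real N * \<epsilon>..b - 2 * real N * \<epsilon>}" using Npos by (simp add: \<epsilon>_def t_def field_simps)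
  have bp: "\<And>y :: real \<Rightarrow> complex. boxp a b N \<gamma> \<epsilon> y t = Sp \<epsilon> y t" using safe_t[OF e t] e by (intro boxp_Sp) auto
  have r0: "\<And>y :: real \<Rightarrow> complex. boxrs a b 1 0 \<epsilon> y t = (y (t + \<epsilon>) - y t) / of_real \<epsilon>"
    using rs_eval[OF e safe_t(3,4)[OF e t]] by simp
  have r1: "\<And>(y :: real \<Rightarrow> complex) l. l \<in> {- (int N - 1)..int N - 1} \<Longrightarrow> boxrs a b 1 (-1) \<epsilon> y (t - of_int l * \<epsilon>) =
      (y (t - of_int l * \<epsilon> - \<epsilon>) - 2 * y (t - of_int l * \<epsilon>) + y (t - of_int l * \<epsilon> + \<epsilon>)) / of_real \<epsilon>"
    using rs_eval[OF e safe_u[OF e t]] by simp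
  have F1': "boxp a b N \<gamma> \<epsilon> (\<lambda>s. 1) t = boxrs a b 1 0 \<epsilon> (\<lambda>s. 1) t +
       (\<Sum>l\<in>{- (int N - 1)..int N - 1}. k (l + int N) * boxrs a b 1 (-1) \<epsilon> (\<lambda>s. 1) (t - of_int l * \<epsilon>))"
    using F1 e t by blast
  have "Sp \<epsilon> (\<lambda>s. 1) t = 0" using F1' by (simp add: bp r0 r1)
  then have S0: "(\<Sum>l\<in>{- int N..int N}. \<gamma> l) = 0" using e by (simp add: Sp_1)
  have F2': "boxp a b N \<gamma> \<epsilon> (\<lambda>s. of_real s) t = boxrs a b 1 0 \<epsilon> (\<lambda>s. of_real s) t +
       (\<Sum>l\<in>{- (int N - 1)..int N - 1}. k (l + int N) * boxrs a b 1 (-1) \<epsilon> (\<lambda>s. of_real s) (t - of_int l * \<epsilon>))"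
    using F2 e t by blast
  have "Sp \<epsilon> (\<lambda>s. of_real s) t = 1" using F2' e by (simp add: bp r0 r1)
  then have S1: "(\<Sum>l\<in>{- int N..int N}. of_int l * \<gamma> l) = 1" using e by (simp add: Sp_id S0)
  show ?thesis using S0 S1 by simp
qed

end


lemma bl_c: "bounded_linear (\<lambda>v::real^'n. complex_of_real (v $ j))"
  by (rule bounded_linear_compose[OF bounded_linear_of_real bounded_linear_vec_nth])

lemma bl_m: "bounded_linear (\<lambda>M::real^'n^'m. complex_of_real (M $ i $ j))"
  by (rule bounded_linear_compose[OF bl_c bounded_linear_vec_nth])

lemma der_c:
  "(x has_vector_derivative x') F \<Longrightarrow> ((\<lambda>s. complex_of_real (x s $ j)) has_vector_derivative complex_of_real (x' $ j)) F"
  by (rule bounded_linear.has_vector_derivative[OF bl_c])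

lemma der_m:
  "(x has_vector_derivative x') F \<Longrightarrow> ((\<lambda>s. complex_of_real (x s $ i $ j)) has_vector_derivative complex_of_real (x' $ i $ j)) F"
  by (rule bounded_linear.has_vector_derivative[OF bl_m])

lemma cont_c: "continuous_on S x \<Longrightarrow> continuous_on S (\<lambda>s. complex_of_real (x s $ j))"
  by (intro continuous_intros)

lemma cont_m: "continuous_on S x \<Longrightarrow> continuous_on S (\<lambda>s. complex_of_real (x s $ i $ j))"
  by (intro continuous_intros)

lemma smooth_deriv_cont:
  fixes f :: "real \<Rightarrow> 'v::real_normed_vector"
  assumes ab: "a < b" and sm: "smooth_on {a..b} f"
    and der: "\<forall>t\<in>{a..b}. (f has_vector_derivative f' t) (at t within {a..b})"
  shows "continuous_on {a..b} f'"
proof -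
  obtain D where D0: "\<forall>t\<in>{a..b}. D 0 t = f t"
    and Dk: "\<forall>k. \<forall>t\<in>{a..b}. (D k has_vector_derivative D (Suc k) t) (at t within {a..b})"
    using sm unfolding smooth_on_def by blast
  have eq: "f' t = D 1 t" if t: "t \<in> {a..b}" for t
  proof -
    have dd: "(D 0 has_vector_derivative D 1 t) (at t within {a..b})" using Dk t by simp
    have "(f has_vector_derivative D 1 t) (at t within {a..b})"
      by (rule has_vector_derivative_transform[OF t _ dd]) (use D0 in auto)
    then show ?thesis
      using vector_derivative_unique_within_closed_interval[of a b t f "f' t" "D 1 t"] ab t der
      by (simp add: box_real)
  qed
  have "continuous_on {a..b} (D 1)"
  proof (rule continuous_on_vector_derivative)
    fix t assume "t \<in> {a..b}"
    then show "(D 1 has_vector_derivative D 2 t) (at t within {a..b})"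
      using Dk[rule_format, of t 1] by (simp add: numeral_2_eq_2)
  qed
  then show ?thesis using eq by (metis continuous_on_cong)
qed

lemma loc_comp:
  fixes F :: "real \<Rightarrow> real \<Rightarrow> 'c::real_normed_vector ^ 'd"
  shows "loc_unif_conv a b F G \<Longrightarrow> loc_unif_conv a b (\<lambda>h t. F h t $ i) (\<lambda>t. G t $ i)"
  unfolding loc_unif_conv_def
proof (intro allI impI)
  fix \<delta> :: real assume "\<forall>\<delta>>0. uniform_limit {a + \<delta>..b - \<delta>} F G (at_right 0)" "\<delta> > 0"
  then have "uniform_limit {a + \<delta>..b - \<delta>} F G (at_right 0)" by blast
  from bounded_linear.uniform_limit[OF bounded_linear_vec_nth[of i] this]
  show "uniform_limit {a + \<delta>..b - \<delta>} (\<lambda>h t. F h t $ i) (\<lambda>t. G t $ i) (at_right 0)" .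
qed

lemma loc_vec:
  fixes F :: "real \<Rightarrow> real \<Rightarrow> 'c::real_normed_vector ^ 'd"
  shows "(\<And>i. loc_unif_conv a b (\<lambda>h t. F h t $ i) (\<lambda>t. G t $ i)) \<Longrightarrow> loc_unif_conv a b F G"
  unfolding loc_unif_conv_def
proof (intro allI impI)
  fix \<delta> :: real assume A: "\<And>i. \<forall>\<delta>>0. uniform_limit {a + \<delta>..b - \<delta>} (\<lambda>h t. F h t $ i) (\<lambda>t. G t $ i) (at_right 0)" and d: "\<delta> > 0"
  show "uniform_limit {a + \<delta>..b - \<delta>} F G (at_right 0)"
    by (rule ulim_vec) (use A d in blast)
qed

lemma cvec_nth [simp]: "cvec v $ i = complex_of_real (v $ i)"
  by (simp add: cvec_def)

lemma cmat_nth [simp]: "cmat M $ i $ j = complex_of_real (M $ i $ j)"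
  by (simp add: cmat_def)

lemma boxpv_nth [simp]: "boxpv a b N \<gamma> \<epsilon> f t $ i = boxp a b N \<gamma> \<epsilon> (\<lambda>s. f s $ i) t"
  by (simp add: boxpv_def)

lemma boxmv_nth [simp]: "boxmv a b N \<gamma> \<epsilon> f t $ i = boxm a b N \<gamma> \<epsilon> (\<lambda>s. f s $ i) t"
  by (simp add: boxmv_def)

lemma boxrsv_nth [simp]: "boxrsv a b r s \<epsilon> f t $ i = boxrs a b r s \<epsilon> (\<lambda>s. f s $ i) t"
  by (simp add: boxrsv_def)

lemma mv_nth: "(M *v v) $ i = (\<Sum>j\<in>UNIV. M $ i $ j * v $ j)"
  by (simp add: matrix_vector_mult_def)

lemma boxm_sum: "boxm a b N \<gamma> \<epsilon> (\<lambda>s. \<Sum>j\<in>J. g j s) t = (\<Sum>j\<in>J. boxm a b N \<gamma> \<epsilon> (g j) t)"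
  unfolding boxm_def by (simp add: sum_distrib_left sum_distrib_right sum.swap[of _ J])

lemma boxm_diff: "boxm a b N \<gamma> \<epsilon> (\<lambda>s. f s - g s) t = boxm a b N \<gamma> \<epsilon> f t - boxm a b N \<gamma> \<epsilon> g t"
  unfolding boxm_def by (simp add: algebra_simps sum_subtractf)

lemma C2_c:
  assumes "C2_on {a..b} x x' x''"
  shows "\<forall>t\<in>{a..b}. ((\<lambda>s. complex_of_real (x s $ j)) has_vector_derivative complex_of_real (x' t $ j)) (at t within {a..b})"
    and "\<forall>t\<in>{a..b}. ((\<lambda>s. complex_of_real (x' s $ j)) has_vector_derivative complex_of_real (x'' t $ j)) (at t within {a..b})"
    and "continuous_on {a..b} (\<lambda>s. complex_of_real (x' s $ j))"
    and "continuous_on {a..b} (\<lambda>s. complex_of_real (x'' s $ j))"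
    and "continuous_on {a..b} (\<lambda>s. complex_of_real (x s $ j))"
proof -
  from assms have d1: "\<forall>t\<in>{a..b}. (x has_vector_derivative x' t) (at t within {a..b})"
    and d2: "\<forall>t\<in>{a..b}. (x' has_vector_derivative x'' t) (at t within {a..b})"
    and c: "continuous_on {a..b} x''" unfolding C2_on_def by auto
  show "\<forall>t\<in>{a..b}. ((\<lambda>s. complex_of_real (x s $ j)) has_vector_derivative complex_of_real (x' t $ j)) (at t within {a..b})"
    using d1 by (auto intro: der_c)
  show "\<forall>t\<in>{a..b}. ((\<lambda>s. complex_of_real (x' s $ j)) has_vector_derivative complex_of_real (x'' t $ j)) (at t within {a..b})"
    using d2 by (auto intro: der_c)
  show "continuous_on {a..b} (\<lambda>s. complex_of_real (x' s $ j))"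
    using d2 by (intro cont_c continuous_on_vector_derivative) auto
  show "continuous_on {a..b} (\<lambda>s. complex_of_real (x s $ j))"
    using d1 by (intro cont_c continuous_on_vector_derivative) auto
  show "continuous_on {a..b} (\<lambda>s. complex_of_real (x'' s $ j))"
    using c by (intro cont_c)
qed

context ops begin

lemma E_B:
  assumes S0: "(\<Sum>l\<in>{- int N..int N}. \<gamma> l) = 0" and S1: "(\<Sum>l\<in>{- int N..int N}. of_int l * \<gamma> l) = 1"
    and x: "C2_on {a..b} (x :: real \<Rightarrow> real ^ 'd) x' x''"
  shows "loc_unif_conv a b (\<lambda>\<epsilon> t. boxpv a b N \<gamma> \<epsilon> (\<lambda>s. cvec (x s)) t) (\<lambda>t. cvec (x' t))"
proof (rule loc_vec)
  fix i
  show "loc_unif_conv a b (\<lambda>h t. boxpv a b N \<gamma> h (\<lambda>s. cvec (x s)) t $ i) (\<lambda>t. cvec (x' t) $ i)"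
    unfolding loc_unif_conv_def using C2_c[OF x, of i] by (auto intro!: P1[OF S0 S1])
qed

lemma E_C:
  assumes S0: "(\<Sum>l\<in>{- int N..int N}. \<gamma> l) = 0" and S1: "(\<Sum>l\<in>{- int N..int N}. of_int l * \<gamma> l) = 1"
    and x: "C2_on {a..b} (x :: real \<Rightarrow> real ^ 'd) x' x''"
  shows "loc_unif_conv a b (\<lambda>\<epsilon> t. boxmv a b N \<gamma> \<epsilon> (\<lambda>s. cvec (x s)) t) (\<lambda>t. - cvec (x' t))"
proof (rule loc_vec)
  fix i
  show "loc_unif_conv a b (\<lambda>h t. boxmv a b N \<gamma> h (\<lambda>s. cvec (x s)) t $ i) (\<lambda>t. (- cvec (x' t)) $ i)"
    unfolding loc_unif_conv_def using C2_c[OF x, of i] by (auto intro!: M1[OF S0 S1])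
qed

lemma C2_const: "C2_on {a..b} (\<lambda>s. c) (\<lambda>s. 0) (\<lambda>s. 0)"
  unfolding C2_on_def by simp

lemma C2_lin: "C2_on {a..b} (\<lambda>s. s *\<^sub>R (1 :: real ^ 'd)) (\<lambda>s. 1) (\<lambda>s. 0)"
proof -
  have "((\<lambda>s. s *\<^sub>R (1 :: real ^ 'd)) has_vector_derivative 1) (at t within {a..b})" for t
    using has_vector_derivative_scaleR[OF DERIV_ident has_vector_derivative_const]
    by simp
  then show ?thesis unfolding C2_on_def by simp
qed

lemma B_E:
  assumes B: "\<forall>(x :: real \<Rightarrow> real ^ 'd) x' x''. C2_on {a..b} x x' x'' \<longrightarrow>
             loc_unif_conv a b (\<lambda>\<epsilon> t. boxpv a b N \<gamma> \<epsilon> (\<lambda>s. cvec (x s)) t) (\<lambda>t. cvec (x' t))"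
  shows "(\<Sum>l\<in>{- int N..int N}. \<gamma> l) = 0 \<and> (\<Sum>l\<in>{- int N..int N}. of_int l * \<gamma> l) = 1"
proof (rule Dp_E)
  have "loc_unif_conv a b (\<lambda>\<epsilon> t. boxpv a b N \<gamma> \<epsilon> (\<lambda>s. cvec ((\<lambda>s. 1 :: real ^ 'd) s)) t) (\<lambda>t. cvec ((\<lambda>s. 0 :: real ^ 'd) t))"
    using B C2_const by blast
  from loc_comp[OF this, of undefined]
  show "loc_unif_conv a b (\<lambda>h t. boxp a b N \<gamma> h (\<lambda>s. 1) t) (\<lambda>t. 0)" by simp
  have "loc_unif_conv a b (\<lambda>\<epsilon> t. boxpv a b N \<gamma> \<epsilon> (\<lambda>s. cvec ((\<lambda>s. s *\<^sub>R (1 :: real ^ 'd)) s)) t) (\<lambda>t. cvec ((\<lambda>s. 1 :: real ^ 'd) t))"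
    using B C2_lin by blast
  from loc_comp[OF this, of undefined]
  show "loc_unif_conv a b (\<lambda>h t. boxp a b N \<gamma> h (\<lambda>s. complex_of_real s) t) (\<lambda>t. 1)" by simp
qed

lemma C_E:
  assumes C: "\<forall>(x :: real \<Rightarrow> real ^ 'd) x' x''. C2_on {a..b} x x' x'' \<longrightarrow>
             loc_unif_conv a b (\<lambda>\<epsilon> t. boxmv a b N \<gamma> \<epsilon> (\<lambda>s. cvec (x s)) t) (\<lambda>t. - cvec (x' t))"
  shows "(\<Sum>l\<in>{- int N..int N}. \<gamma> l) = 0 \<and> (\<Sum>l\<in>{- int N..int N}. of_int l * \<gamma> l) = 1"
proof (rule Dm_E)
  have "loc_unif_conv a b (\<lambda>\<epsilon> t. boxmv a b N \<gamma> \<epsilon> (\<lambda>s. cvec ((\<lambda>s. 1 :: real ^ 'd) s)) t) (\<lambda>t. - cvec ((\<lambda>s. 0 :: real ^ 'd) t))"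
    using C C2_const by blast
  from loc_comp[OF this, of undefined]
  show "loc_unif_conv a b (\<lambda>h t. boxm a b N \<gamma> h (\<lambda>s. 1) t) (\<lambda>t. 0)" by simp
  have "loc_unif_conv a b (\<lambda>\<epsilon> t. boxmv a b N \<gamma> \<epsilon> (\<lambda>s. cvec ((\<lambda>s. s *\<^sub>R (1 :: real ^ 'd)) s)) t) (\<lambda>t. - cvec ((\<lambda>s. 1 :: real ^ 'd) t))"
    using C C2_lin by blast
  from loc_comp[OF this, of undefined]
  show "loc_unif_conv a b (\<lambda>h t. boxm a b N \<gamma> h (\<lambda>s. complex_of_real s) t) (\<lambda>t. -1)" by simp
qed

end


lemma bounded_sub:
  fixes f :: "real \<Rightarrow> 'b::real_normed_vector"
  assumes "continuous_on {a..b} f" "S \<subseteq> {a..b}"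
  shows "bounded (f ` S)"
proof -
  have "compact (f ` {a..b})" using assms by (intro compact_continuous_image) auto
  then have "bounded (f ` {a..b})" by (rule compact_imp_bounded)
  then show ?thesis by (rule bounded_subset) (use assms in auto)
qed

context ops begin

lemma E_A:
  fixes P Q R :: "real \<Rightarrow> real ^ 'd ^ 'd" and J1 J2 :: "real \<Rightarrow> real ^ 'd" and x :: "real \<Rightarrow> real ^ 'd"
  assumes S0: "(\<Sum>l\<in>{- int N..int N}. \<gamma> l) = 0" and S1: "(\<Sum>l\<in>{- int N..int N}. of_int l * \<gamma> l) = 1"
    and smP: "smooth_on {a..b} P" and smR: "smooth_on {a..b} R" and smJ1: "smooth_on {a..b} J1"
    and dP: "\<forall>t\<in>{a..b}. (P has_vector_derivative P' t) (at t within {a..b})"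
    and dR: "\<forall>t\<in>{a..b}. (R has_vector_derivative R' t) (at t within {a..b})"
    and dJ1: "\<forall>t\<in>{a..b}. (J1 has_vector_derivative J1' t) (at t within {a..b})"
    and x: "C2_on {a..b} x x' x''"
  shows "loc_unif_conv a b (\<lambda>\<epsilon> t. Theta a b N \<gamma> \<epsilon> P Q R J1 J2 x t)
                   (\<lambda>t. cvec (- (P t *v x'' t) + (- P' t + 2 *\<^sub>R R t) *v x' t
                              + (R' t + Q t) *v x t - J1' t + J2 t))"
proof (rule loc_vec)
  fix i
  define p where "p j s = complex_of_real (P s $ i $ j)" for j s
  define p' where "p' j s = complex_of_real (P' s $ i $ j)" for j s
  define r where "r j s = complex_of_real (R s $ i $ j)" for j s
  define r' where "r' j s = complex_of_real (R' s $ i $ j)" for j s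
  define q where "q j s = complex_of_real (Q s $ i $ j)" for j s
  define X where "X j s = complex_of_real (x s $ j)" for j s
  define X' where "X' j s = complex_of_real (x' s $ j)" for j s
  define X'' where "X'' j s = complex_of_real (x'' s $ j)" for j s
  define j1 where "j1 s = complex_of_real (J1 s $ i)" for s
  define j1' where "j1' s = complex_of_real (J1' s $ i)" for s
  define j2 where "j2 s = complex_of_real (J2 s $ i)" for s
  note XX = C2_c[OF x, folded X_def X'_def X''_def]
  have dp: "\<forall>t\<in>{a..b}. (p j has_vector_derivative p' j t) (at t within {a..b})" for j
    using dP unfolding p_def p'_def by (auto intro: der_m)
  have cp': "continuous_on {a..b} (p' j)" for j
    unfolding p'_def by (intro cont_m smooth_deriv_cont[OF ab smP dP])
  have dr: "\<forall>t\<in>{a..b}. (r j has_vector_derivative r' j t) (at t within {a..b})" for j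
    using dR unfolding r_def r'_def by (auto intro: der_m)
  have cr': "continuous_on {a..b} (r' j)" for j
    unfolding r'_def by (intro cont_m smooth_deriv_cont[OF ab smR dR])
  have cr: "continuous_on {a..b} (r j)" for j
    using dr by (intro continuous_on_vector_derivative[where f'="r' j"]) auto
  have dj1: "\<forall>t\<in>{a..b}. (j1 has_vector_derivative j1' t) (at t within {a..b})"
    using dJ1 unfolding j1_def j1'_def by (auto intro: der_c)
  have cj1': "continuous_on {a..b} j1'"
    unfolding j1'_def by (intro cont_c smooth_deriv_cont[OF ab smJ1 dJ1])
  have drX: "\<forall>t\<in>{a..b}. ((\<lambda>s. r j s * X j s) has_vector_derivative (r' j t * X j t + r j t * X' j t)) (at t within {a..b})" for j
    using dr XX(1) by (auto intro!: derivative_eq_intros simp: algebra_simps)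
  have crX: "continuous_on {a..b} (\<lambda>t. r' j t * X j t + r j t * X' j t)" for j
    by (intro continuous_intros cr' cr XX)
  have TH: "Theta a b N \<gamma> h P Q R J1 J2 x t $ i =
      (\<Sum>j\<in>UNIV. boxm a b N \<gamma> h (\<lambda>s. p j s * boxp a b N \<gamma> h (X j) s) t)
      - (\<Sum>j\<in>UNIV. boxm a b N \<gamma> h (\<lambda>s. r j s * X j s) t)
      + (\<Sum>j\<in>UNIV. r j t * boxp a b N \<gamma> h (X j) t)
      + (\<Sum>j\<in>UNIV. q j t * X j t)
      + boxm a b N \<gamma> h j1 t + j2 t" for h t
    unfolding X_def[abs_def] j1_def[abs_def] by (simp add: Theta_def mv_nth boxm_sum p_def r_def q_def j2_def)
  have TG: "cvec (- (P t *v x'' t) + (- P' t + 2 *\<^sub>R R t) *v x' t + (R' t + Q t) *v x t - J1' t + J2 t) $ i =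
      (\<Sum>j\<in>UNIV. - (p' j t * X' j t + p j t * X'' j t))
      - (\<Sum>j\<in>UNIV. - (r' j t * X j t + r j t * X' j t))
      + (\<Sum>j\<in>UNIV. r j t * X' j t)
      + (\<Sum>j\<in>UNIV. q j t * X j t)
      + - j1' t + j2 t" for t
    by (simp add: mv_nth p_def p'_def r_def r'_def q_def X_def X'_def X''_def j1'_def j2_def
        sum_negf[symmetric] sum.distrib[symmetric] sum_subtractf[symmetric] algebra_simps)
  show "loc_unif_conv a b (\<lambda>h t. Theta a b N \<gamma> h P Q R J1 J2 x t $ i)
      (\<lambda>t. cvec (- (P t *v x'' t) + (- P' t + 2 *\<^sub>R R t) *v x' t + (R' t + Q t) *v x t - J1' t + J2 t) $ i)"
    unfolding loc_unif_conv_def TH TG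
  proof (intro allI impI)
    fix \<delta> :: real assume \<delta>: "\<delta> > 0"
    have Ssub: "{a+\<delta>..b-\<delta>} \<subseteq> {a..b}" using \<delta> by auto
    show "uniform_limit {a + \<delta>..b - \<delta>}
        (\<lambda>h t. (\<Sum>j\<in>UNIV. boxm a b N \<gamma> h (\<lambda>s. p j s * boxp a b N \<gamma> h (X j) s) t)
          - (\<Sum>j\<in>UNIV. boxm a b N \<gamma> h (\<lambda>s. r j s * X j s) t)
          + (\<Sum>j\<in>UNIV. r j t * boxp a b N \<gamma> h (X j) t)
          + (\<Sum>j\<in>UNIV. q j t * X j t)
          + boxm a b N \<gamma> h j1 t + j2 t)
        (\<lambda>t. (\<Sum>j\<in>UNIV. - (p' j t * X' j t + p j t * X'' j t))
          - (\<Sum>j\<in>UNIV. - (r' j t * X j t + r j t * X' j t))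
          + (\<Sum>j\<in>UNIV. r j t * X' j t)
          + (\<Sum>j\<in>UNIV. q j t * X j t)
          + - j1' t + j2 t) (at_right 0)"
    proof (intro uniform_limit_add uniform_limit_minus uniform_limit_const)
      show "uniform_limit {a + \<delta>..b - \<delta>} (\<lambda>h t. \<Sum>j\<in>UNIV. boxm a b N \<gamma> h (\<lambda>s. p j s * boxp a b N \<gamma> h (X j) s) t)
          (\<lambda>t. \<Sum>j\<in>UNIV. - (p' j t * X' j t + p j t * X'' j t)) (at_right 0)"
        by (intro uniform_limit_sum'[OF finite] M2[OF S0 S1 dp cp' XX(1) XX(2) XX(4) \<delta>])
      show "uniform_limit {a + \<delta>..b - \<delta>} (\<lambda>h t. \<Sum>j\<in>UNIV. boxm a b N \<gamma> h (\<lambda>s. r j s * X j s) t)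
          (\<lambda>t. \<Sum>j\<in>UNIV. - (r' j t * X j t + r j t * X' j t)) (at_right 0)"
        by (intro uniform_limit_sum'[OF finite] M1[OF S0 S1 drX crX \<delta>])
      show "uniform_limit {a + \<delta>..b - \<delta>} (\<lambda>h t. \<Sum>j\<in>UNIV. r j t * boxp a b N \<gamma> h (X j) t)
          (\<lambda>t. \<Sum>j\<in>UNIV. r j t * X' j t) (at_right 0)"
        by (intro uniform_limit_sum'[OF finite] uniform_lim_mult uniform_limit_const
             P1[OF S0 S1 XX(1) XX(3) \<delta>] bounded_sub[OF cr Ssub] bounded_sub[OF XX(3) Ssub])
      show "uniform_limit {a + \<delta>..b - \<delta>} (\<lambda>h t. boxm a b N \<gamma> h j1 t) (\<lambda>t. - j1' t) (at_right 0)"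
        by (rule M1[OF S0 S1 dj1 cj1' \<delta>])
    qed
  qed
qed

lemma smooth_const: "smooth_on S (\<lambda>s. c)"
  unfolding smooth_on_def by (intro exI[of _ "\<lambda>k s. if k = 0 then c else 0"]) auto

lemma smooth_lin: "smooth_on S (\<lambda>s. s *\<^sub>R (1 :: real ^ 'd))"
  unfolding smooth_on_def
proof (intro exI[of _ "\<lambda>k s. if k = 0 then s *\<^sub>R (1 :: real ^ 'd) else if k = 1 then 1 else 0"] conjI ballI allI)
  fix k t assume "t \<in> S"
  show "((\<lambda>s. if k = 0 then s *\<^sub>R (1 :: real ^ 'd) else if k = 1 then 1 else 0) has_vector_derivative
      (if Suc k = 0 then t *\<^sub>R (1 :: real ^ 'd) else if Suc k = 1 then 1 else 0)) (at t within S)"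
    using has_vector_derivative_scaleR[OF DERIV_ident has_vector_derivative_const]
    by (cases "k = 0") auto
qed auto

end


lemma transpose_zero': "transpose (0 :: 'a::zero ^ 'n ^ 'm) = 0"
  by (simp add: transpose_def vec_eq_iff)

context ops begin

lemma lin_der: "((\<lambda>s. s *\<^sub>R (1 :: real ^ 'd)) has_vector_derivative 1) (at t within S)"
  using has_vector_derivative_scaleR[OF DERIV_ident has_vector_derivative_const] by simp

lemma A_E:
  assumes A: "\<forall>(P :: real \<Rightarrow> real ^ 'd ^ 'd) P' Q R R' (J1 :: real \<Rightarrow> real ^ 'd) J1' J2
                    (x :: real \<Rightarrow> real ^ 'd) x' x''.
             smooth_on {a..b} P \<and> smooth_on {a..b} Q \<and> smooth_on {a..b} R
             \<and> smooth_on {a..b} J1 \<and> smooth_on {a..b} J2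
             \<and> (\<forall>t\<in>{a..b}. (P has_vector_derivative P' t) (at t within {a..b}))
             \<and> (\<forall>t\<in>{a..b}. (R has_vector_derivative R' t) (at t within {a..b}))
             \<and> (\<forall>t\<in>{a..b}. (J1 has_vector_derivative J1' t) (at t within {a..b}))
             \<and> (\<forall>t\<in>{a..b}. transpose (P t) = P t)
             \<and> (\<forall>t\<in>{a..b}. transpose (Q t) = Q t)
             \<and> (\<forall>t\<in>{a..b}. transpose (R t) = - R t)
             \<and> C2_on {a..b} x x' x''
             \<longrightarrow> loc_unif_conv a b (\<lambda>\<epsilon> t. Theta a b N \<gamma> \<epsilon> P Q R J1 J2 x t)
                   (\<lambda>t. cvec (- (P t *v x'' t) + (- P' t + 2 *\<^sub>R R t) *v x' t
                              + (R' t + Q t) *v x t - J1' t + J2 t))"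
  shows "(\<Sum>l\<in>{- int N..int N}. \<gamma> l) = 0 \<and> (\<Sum>l\<in>{- int N..int N}. of_int l * \<gamma> l) = 1"
proof (rule Dm_E)
  have L: "loc_unif_conv a b (\<lambda>\<epsilon> t. Theta a b N \<gamma> \<epsilon> (\<lambda>s. 0 :: real^'d^'d) (\<lambda>s. 0) (\<lambda>s. 0) (\<lambda>s. 1 :: real ^ 'd) (\<lambda>s. 0) (\<lambda>s. 0) t)
      (\<lambda>t. cvec (- ((0 :: real^'d^'d) *v (0 :: real ^ 'd)) + (- 0 + 2 *\<^sub>R 0) *v 0 + (0 + 0) *v 0 - 0 + 0))"
    using A[rule_format, of "\<lambda>s. 0" "\<lambda>s. 0" "\<lambda>s. 0" "\<lambda>s. 1" "\<lambda>s. 0" "\<lambda>s. 0" "\<lambda>s. 0" "\<lambda>s. 0" "\<lambda>s. 0" "\<lambda>s. 0" "\<lambda>s. 0"]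
    by (simp add: smooth_const C2_const transpose_zero')
  from loc_comp[OF L, of undefined]
  show "loc_unif_conv a b (\<lambda>h t. boxm a b N \<gamma> h (\<lambda>s. 1) t) (\<lambda>t. 0)"
    by (simp add: Theta_def mv_nth boxm_def boxp_def)
  have L2: "loc_unif_conv a b (\<lambda>\<epsilon> t. Theta a b N \<gamma> \<epsilon> (\<lambda>s. 0 :: real^'d^'d) (\<lambda>s. 0) (\<lambda>s. 0) (\<lambda>s. s *\<^sub>R (1 :: real ^ 'd)) (\<lambda>s. 0) (\<lambda>s. 0) t)
      (\<lambda>t. cvec (- ((0 :: real^'d^'d) *v (0 :: real ^ 'd)) + (- 0 + 2 *\<^sub>R 0) *v 0 + (0 + 0) *v 0 - 1 + 0))"
    using A[rule_format, of "\<lambda>s. 0" "\<lambda>s. 0" "\<lambda>s. 0" "\<lambda>s. s *\<^sub>R 1" "\<lambda>s. 0" "\<lambda>s. 0" "\<lambda>s. 0" "\<lambda>s. 1" "\<lambda>s. 0" "\<lambda>s. 0" "\<lambda>s. 0"]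
    by (simp add: smooth_const smooth_lin C2_const transpose_zero' lin_der)
  from loc_comp[OF L2, of undefined]
  show "loc_unif_conv a b (\<lambda>h t. boxm a b N \<gamma> h (\<lambda>s. complex_of_real s) t) (\<lambda>t. -1)"
    by (simp add: Theta_def mv_nth boxm_def boxp_def)
qed

end

theorem mainTheorem5:
  fixes a b :: real and N :: nat and \<gamma> :: "int \<Rightarrow> complex"
  assumes "a < b" and "N \<ge> 1"
  defines "A \<equiv> (\<forall>(P :: real \<Rightarrow> real ^ 'd ^ 'd) P' Q R R' (J1 :: real \<Rightarrow> real ^ 'd) J1' J2
                    (x :: real \<Rightarrow> real ^ 'd) x' x''.
             smooth_on {a..b} P \<and> smooth_on {a..b} Q \<and> smooth_on {a..b} R
             \<and> smooth_on {a..b} J1 \<and> smooth_on {a..b} J2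
             \<and> (\<forall>t\<in>{a..b}. (P has_vector_derivative P' t) (at t within {a..b}))
             \<and> (\<forall>t\<in>{a..b}. (R has_vector_derivative R' t) (at t within {a..b}))
             \<and> (\<forall>t\<in>{a..b}. (J1 has_vector_derivative J1' t) (at t within {a..b}))
             \<and> (\<forall>t\<in>{a..b}. transpose (P t) = P t)
             \<and> (\<forall>t\<in>{a..b}. transpose (Q t) = Q t)
             \<and> (\<forall>t\<in>{a..b}. transpose (R t) = - R t)
             \<and> C2_on {a..b} x x' x''
             \<longrightarrow> loc_unif_conv a b (\<lambda>\<epsilon> t. Theta a b N \<gamma> \<epsilon> P Q R J1 J2 x t)
                   (\<lambda>t. cvec (- (P t *v x'' t) + (- P' t + 2 *\<^sub>R R t) *v x' t
                              + (R' t + Q t) *v x t - J1' t + J2 t)))"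
  defines "B \<equiv> (\<forall>(x :: real \<Rightarrow> real ^ 'd) x' x''. C2_on {a..b} x x' x'' \<longrightarrow>
             loc_unif_conv a b (\<lambda>\<epsilon> t. boxpv a b N \<gamma> \<epsilon> (\<lambda>s. cvec (x s)) t) (\<lambda>t. cvec (x' t)))"
  defines "C \<equiv> (\<forall>(x :: real \<Rightarrow> real ^ 'd) x' x''. C2_on {a..b} x x' x'' \<longrightarrow>
             loc_unif_conv a b (\<lambda>\<epsilon> t. boxmv a b N \<gamma> \<epsilon> (\<lambda>s. cvec (x s)) t) (\<lambda>t. - cvec (x' t)))"
  defines "D \<equiv> (loc_unif_conv a b (\<lambda>\<epsilon> t. boxp a b N \<gamma> \<epsilon> (\<lambda>s. 1) t) (\<lambda>t. 0)
             \<and> loc_unif_conv a b (\<lambda>\<epsilon> t. boxp a b N \<gamma> \<epsilon> (\<lambda>s. complex_of_real s) t) (\<lambda>t. 1))"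
  defines "E \<equiv> ((\<Sum>l\<in>{- int N..int N}. \<gamma> l) = 0 \<and> (\<Sum>l\<in>{- int N..int N}. of_int l * \<gamma> l) = 1)"
  defines "F \<equiv> (\<exists>k :: int \<Rightarrow> complex. \<forall>\<epsilon>>0. \<forall>(x :: real \<Rightarrow> real ^ 'd).
             \<forall>t\<in>{a + 2 * real N * \<epsilon>..b - 2 * real N * \<epsilon>}.
               boxpv a b N \<gamma> \<epsilon> (\<lambda>s. cvec (x s)) t
               = boxrsv a b 1 0 \<epsilon> (\<lambda>s. cvec (x s)) t
                 + (\<Sum>l\<in>{- (int N - 1)..int N - 1}.
                      k (l + int N) *s boxrsv a b 1 (-1) \<epsilon> (\<lambda>s. cvec (x s)) (t - of_int l * \<epsilon>)))"
  shows "(A \<longleftrightarrow> B) \<and> (B \<longleftrightarrow> C) \<and> (C \<longleftrightarrow> D) \<and> (D \<longleftrightarrow> E) \<and> (E \<longleftrightarrow> F)"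
proof -
  interpret ops a b N \<gamma> using assms(1,2) by unfold_locales
  have AE: "A \<longleftrightarrow> E"
  proof
    assume A then show E unfolding A_def E_def by (rule A_E)
  next
    assume E
    then have S0: "(\<Sum>l\<in>{- int N..int N}. \<gamma> l) = 0" and S1: "(\<Sum>l\<in>{- int N..int N}. of_int l * \<gamma> l) = 1"
      unfolding E_def by auto
    show A unfolding A_def
      by (intro allI impI) (rule E_A[OF S0 S1], auto)
  qed
  have BE: "B \<longleftrightarrow> E"
  proof
    assume B then show E unfolding B_def E_def by (rule B_E)
  next
    assume E
    then have S0: "(\<Sum>l\<in>{- int N..int N}. \<gamma> l) = 0" and S1: "(\<Sum>l\<in>{- int N..int N}. of_int l * \<gamma> l) = 1"
      unfolding E_def by auto
    show B unfolding B_def by (intro allI impI) (rule E_B[OF S0 S1])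
  qed
  have CE: "C \<longleftrightarrow> E"
  proof
    assume C then show E unfolding C_def E_def by (rule C_E)
  next
    assume E
    then have S0: "(\<Sum>l\<in>{- int N..int N}. \<gamma> l) = 0" and S1: "(\<Sum>l\<in>{- int N..int N}. of_int l * \<gamma> l) = 1"
      unfolding E_def by auto
    show C unfolding C_def by (intro allI impI) (rule E_C[OF S0 S1])
  qed
  have DE: "D \<longleftrightarrow> E"
  proof
    assume D then show E unfolding D_def E_def using Dp_E by blast
  next
    assume E
    then have S0: "(\<Sum>l\<in>{- int N..int N}. \<gamma> l) = 0" and S1: "(\<Sum>l\<in>{- int N..int N}. of_int l * \<gamma> l) = 1"
      unfolding E_def by auto
    show D unfolding D_def using E_D[OF S0 S1] by blast
  qed
  have FE: "F \<longleftrightarrow> E"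
  proof
    assume F
    then obtain k where k: "\<forall>\<epsilon>>0. \<forall>(x :: real \<Rightarrow> real ^ 'd).
             \<forall>t\<in>{a + 2 * real N * \<epsilon>..b - 2 * real N * \<epsilon>}.
               boxpv a b N \<gamma> \<epsilon> (\<lambda>s. cvec (x s)) t
               = boxrsv a b 1 0 \<epsilon> (\<lambda>s. cvec (x s)) t
                 + (\<Sum>l\<in>{- (int N - 1)..int N - 1}.
                      k (l + int N) *s boxrsv a b 1 (-1) \<epsilon> (\<lambda>s. cvec (x s)) (t - of_int l * \<epsilon>))"
      unfolding F_def by blast
    show E unfolding E_def
    proof (rule FS_E[of k])
      show "\<forall>\<epsilon>>0. \<forall>t. t \<in> {a + 2 * real N * \<epsilon>..b - 2 * real N * \<epsilon>} \<longrightarrow>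
         boxp a b N \<gamma> \<epsilon> (\<lambda>s. 1) t = boxrs a b 1 0 \<epsilon> (\<lambda>s. 1) t +
           (\<Sum>l\<in>{- (int N - 1)..int N - 1}. k (l + int N) * boxrs a b 1 (-1) \<epsilon> (\<lambda>s. 1) (t - of_int l * \<epsilon>))"
      proof (intro allI impI)
        fix \<epsilon> :: real and t assume e: "\<epsilon> > 0" and t: "t \<in> {a + 2 * real N * \<epsilon>..b - 2 * real N * \<epsilon>}"
        have "boxpv a b N \<gamma> \<epsilon> (\<lambda>s. cvec ((\<lambda>s. 1 :: real ^ 'd) s)) t
               = (boxrsv a b 1 0 \<epsilon> (\<lambda>s. cvec ((\<lambda>s. 1 :: real ^ 'd) s)) t
                 + (\<Sum>l\<in>{- (int N - 1)..int N - 1}.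
                      k (l + int N) *s boxrsv a b 1 (-1) \<epsilon> (\<lambda>s. cvec ((\<lambda>s. 1 :: real ^ 'd) s)) (t - of_int l * \<epsilon>)))"
          by (rule k[rule_format, OF e t])
        then have "boxpv a b N \<gamma> \<epsilon> (\<lambda>s. cvec ((\<lambda>s. 1 :: real ^ 'd) s)) t $ undefined
               = (boxrsv a b 1 0 \<epsilon> (\<lambda>s. cvec ((\<lambda>s. 1 :: real ^ 'd) s)) t
                 + (\<Sum>l\<in>{- (int N - 1)..int N - 1}.
                      k (l + int N) *s boxrsv a b 1 (-1) \<epsilon> (\<lambda>s. cvec ((\<lambda>s. 1 :: real ^ 'd) s)) (t - of_int l * \<epsilon>))) $ undefined"
          by simp
        then show "boxp a b N \<gamma> \<epsilon> (\<lambda>s. 1) t = boxrs a b 1 0 \<epsilon> (\<lambda>s. 1) t +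
           (\<Sum>l\<in>{- (int N - 1)..int N - 1}. k (l + int N) * boxrs a b 1 (-1) \<epsilon> (\<lambda>s. 1) (t - of_int l * \<epsilon>))"
          by simp
      qed
      show "\<forall>\<epsilon>>0. \<forall>t. t \<in> {a + 2 * real N * \<epsilon>..b - 2 * real N * \<epsilon>} \<longrightarrow>
         boxp a b N \<gamma> \<epsilon> (\<lambda>s. of_real s) t = boxrs a b 1 0 \<epsilon> (\<lambda>s. of_real s) t +
           (\<Sum>l\<in>{- (int N - 1)..int N - 1}. k (l + int N) * boxrs a b 1 (-1) \<epsilon> (\<lambda>s. of_real s) (t - of_int l * \<epsilon>))"
      proof (intro allI impI)
        fix \<epsilon> :: real and t assume e: "\<epsilon> > 0" and t: "t \<in> {a + 2 * real N * \<epsilon>..b - 2 * real N * \<epsilon>}"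
        have "boxpv a b N \<gamma> \<epsilon> (\<lambda>s. cvec ((\<lambda>s. s *\<^sub>R (1 :: real ^ 'd)) s)) t
               = (boxrsv a b 1 0 \<epsilon> (\<lambda>s. cvec ((\<lambda>s. s *\<^sub>R (1 :: real ^ 'd)) s)) t
                 + (\<Sum>l\<in>{- (int N - 1)..int N - 1}.
                      k (l + int N) *s boxrsv a b 1 (-1) \<epsilon> (\<lambda>s. cvec ((\<lambda>s. s *\<^sub>R (1 :: real ^ 'd)) s)) (t - of_int l * \<epsilon>)))"
          by (rule k[rule_format, OF e t])
        then have "boxpv a b N \<gamma> \<epsilon> (\<lambda>s. cvec ((\<lambda>s. s *\<^sub>R (1 :: real ^ 'd)) s)) t $ undefined
               = (boxrsv a b 1 0 \<epsilon> (\<lambda>s. cvec ((\<lambda>s. s *\<^sub>R (1 :: real ^ 'd)) s)) t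
                 + (\<Sum>l\<in>{- (int N - 1)..int N - 1}.
                      k (l + int N) *s boxrsv a b 1 (-1) \<epsilon> (\<lambda>s. cvec ((\<lambda>s. s *\<^sub>R (1 :: real ^ 'd)) s)) (t - of_int l * \<epsilon>))) $ undefined"
          by simp
        then show "boxp a b N \<gamma> \<epsilon> (\<lambda>s. of_real s) t = boxrs a b 1 0 \<epsilon> (\<lambda>s. of_real s) t +
           (\<Sum>l\<in>{- (int N - 1)..int N - 1}. k (l + int N) * boxrs a b 1 (-1) \<epsilon> (\<lambda>s. of_real s) (t - of_int l * \<epsilon>))"
          by simp
      qed
    qed
  next
    assume E
    then have S0: "(\<Sum>l\<in>{- int N..int N}. \<gamma> l) = 0" and S1: "(\<Sum>l\<in>{- int N..int N}. of_int l * \<gamma> l) = 1"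
      unfolding E_def by auto
    have FS: "FS (\<lambda>n. kap (int N - n))" by (rule E_FS[OF S0 S1])
    show F unfolding F_def
    proof (intro exI[of _ "\<lambda>n. kap (int N - n)"] allI impI ballI)
      fix \<epsilon> :: real and x :: "real \<Rightarrow> real ^ 'd" and t
      assume e: "\<epsilon> > 0" and t: "t \<in> {a + 2 * real N * \<epsilon>..b - 2 * real N * \<epsilon>}"
      show "boxpv a b N \<gamma> \<epsilon> (\<lambda>s. cvec (x s)) t
               = boxrsv a b 1 0 \<epsilon> (\<lambda>s. cvec (x s)) t
                 + (\<Sum>l\<in>{- (int N - 1)..int N - 1}.
                      kap (int N - (l + int N)) *s boxrsv a b 1 (-1) \<epsilon> (\<lambda>s. cvec (x s)) (t - of_int l * \<epsilon>))"
      proof (rule vec_eq_iff[THEN iffD2], rule allI)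
        fix i
        have "boxp a b N \<gamma> \<epsilon> (\<lambda>s. cvec (x s) $ i) t = boxrs a b 1 0 \<epsilon> (\<lambda>s. cvec (x s) $ i) t +
           (\<Sum>l\<in>{- (int N - 1)..int N - 1}. kap (int N - (l + int N)) * boxrs a b 1 (-1) \<epsilon> (\<lambda>s. cvec (x s) $ i) (t - of_int l * \<epsilon>))"
          using FS e t unfolding FS_def by blast
        then show "boxpv a b N \<gamma> \<epsilon> (\<lambda>s. cvec (x s)) t $ i
               = (boxrsv a b 1 0 \<epsilon> (\<lambda>s. cvec (x s)) t
                 + (\<Sum>l\<in>{- (int N - 1)..int N - 1}.
                      kap (int N - (l + int N)) *s boxrsv a b 1 (-1) \<epsilon> (\<lambda>s. cvec (x s)) (t - of_int l * \<epsilon>))) $ i"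
          by simp
      qed
    qed
  qed
  show ?thesis using AE BE CE DE FE by blast
qed


end
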